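(* Let $\theta\mapsto (p_x(\theta),p_y(\theta),p_z(\theta))$ be differentiable with $p_x,p_y,p_z\ge0$ and $p_x+p_y+p_z\le1$, and consider the qubit channels \[ \Lambda_\theta(\rho)=(1-p_x-p_y-p_z)\rho+p_xX\rho X+p_yY\rho Y+p_zZ\rho Z, \] with $X,Y,Z$ the Pauli matrices. Let $q_\theta=(1-p_x(\theta)-p_y(\theta)-p_z(\theta),\,p_x(\theta),\,p_y(\theta),\,p_z(\theta))$, $\delta_\theta=\mathrm{d}q_\theta/\mathrm{d}\theta$ and $\Delta_\theta=\mathrm{d}\Lambda_\theta/\mathrm{d}\theta$. Then \[ G^{\min}_{\Lambda_\theta}(\Delta_\theta)=G^{\max}_{\Lambda_\theta}(\Delta_\theta)=J_{q_\theta}(\delta_\theta). \]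
   Context: A channel is a CPTP linear map; a tangent vector $\Delta$ at a channel $\Phi$ is a Hermiticity-preserving linear map with $\mathrm{tr}\,\Delta(X)=0$ for all $X$. A POVM $M$ is identified with the channel $\sigma\mapsto(\mathrm{tr}\,\sigma M_y)_y$. For a probability distribution $p$ on a finite set and real $\delta$ with $\sum_y\delta(y)=0$, $J_p(\delta)=\sum_y\delta(y)^2/p(y)$ (with $0/0=0$, $c/0=\infty$ for $c\neq0$). $G^{\min}_\Phi(\Delta):=\sup J_{M((\Phi\otimes\mathbf I)(\rho))}\big(M((\Delta\otimes\mathbf I)(\rho))\big)$ over all finite-dimensional auxiliary spaces $\mathcal K$, states $\rho$ on $\mathcal H_{\rm in}\otimes\mathcal K$ and POVMs $M$ on $\mathcal H_{\rm out}\otimes\mathcal K$. A classical tangent simulation of $(\Phi,\Delta)$ is a triple $(q,\delta,\Lambda)$: $q$ a probability distribution on a finite set $Y$, $\delta$ real on $Y$ with $\sum_y\delta(y)=0$, $\Lambda$ a channel from $\mathcal H_{\rm in}\otimes\mathbb C^Y$ to $\mathcal H_{\rm out}$ with $\Phi(X)=\Lambda(X\otimes q)$ and $\Delta(X)=\Lambda(X\otimes\delta)$ for all $X$ ($q,\delta$ as diagonal operators). $G^{\max}_\Phi(\Delta):=\inf J_q(\delta)$ over all such simulations ($\inf\emptyset=\infty$). *)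

theory Defs
  imports Complex_Main "HOL-Library.Extended_Real" "Jordan_Normal_Form.Matrix"
begin

text \<open>Linear maps between operator
spaces are functions on matrices (only their values on the relevant carrier matter).
Tensor products use the Kronecker ordering: index (i, c) of H (x) K is i * dim K + c.\<close>

definition mtrace :: "complex mat \<Rightarrow> complex" where
  "mtrace A = (\<Sum>i<dim_row A. A $$ (i,i))"

definition psd :: "nat \<Rightarrow> complex mat \<Rightarrow> bool" where
  "psd d A \<longleftrightarrow> A \<in> carrier_mat d d \<and>
     (\<forall>v \<in> carrier_vec d. Im ((A *\<^sub>v v) \<bullet> conjugate v) = 0 \<and> Re ((A *\<^sub>v v) \<bullet> conjugate v) \<ge> 0)"

definition density :: "nat \<Rightarrow> complex mat \<Rightarrow> bool" where
  "density d \<rho> \<longleftrightarrow> psd d \<rho> \<and> mtrace \<rho> = 1"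

definition povm :: "nat \<Rightarrow> nat \<Rightarrow> (nat \<Rightarrow> complex mat) \<Rightarrow> bool" where
  "povm d N M \<longleftrightarrow> (\<forall>y<N. psd d (M y)) \<and>
     (\<forall>i<d. \<forall>j<d. (\<Sum>y<N. M y $$ (i,j)) = (1\<^sub>m d :: complex mat) $$ (i,j))"

definition kron :: "complex mat \<Rightarrow> complex mat \<Rightarrow> complex mat" where
  "kron A B = mat (dim_row A * dim_row B) (dim_col A * dim_col B)
     (\<lambda>(i,j). A $$ (i div dim_row B, j div dim_col B) * B $$ (i mod dim_row B, j mod dim_col B))"

text \<open>(Phi (x) id_K)(rho) for Phi : M_n -> M_m and dim K = k.\<close>
definition tensor_id :: "nat \<Rightarrow> nat \<Rightarrow> nat \<Rightarrow> (complex mat \<Rightarrow> complex mat) \<Rightarrow> complex mat \<Rightarrow> complex mat" where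
  "tensor_id n m k \<Phi> \<rho> = mat (m*k) (m*k)
     (\<lambda>(r,s). \<Phi> (mat n n (\<lambda>(i,j). \<rho> $$ (i*k + r mod k, j*k + s mod k))) $$ (r div k, s div k))"

definition channel :: "nat \<Rightarrow> nat \<Rightarrow> (complex mat \<Rightarrow> complex mat) \<Rightarrow> bool" where
  "channel n m \<Phi> \<longleftrightarrow>
     (\<forall>X \<in> carrier_mat n n. \<Phi> X \<in> carrier_mat m m) \<and>
     (\<forall>a X Y. X \<in> carrier_mat n n \<longrightarrow> Y \<in> carrier_mat n n \<longrightarrow> \<Phi> (a \<cdot>\<^sub>m X + Y) = a \<cdot>\<^sub>m \<Phi> X + \<Phi> Y) \<and>
     (\<forall>X \<in> carrier_mat n n. mtrace (\<Phi> X) = mtrace X) \<and>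
     (\<forall>k>0. \<forall>\<rho>. psd (n*k) \<rho> \<longrightarrow> psd (m*k) (tensor_id n m k \<Phi> \<rho>))"

definition Jfi :: "nat set \<Rightarrow> (nat \<Rightarrow> real) \<Rightarrow> (nat \<Rightarrow> real) \<Rightarrow> ereal" where
  "Jfi A p \<delta> = (\<Sum>y\<in>A. if \<delta> y = 0 then 0 else if p y = 0 then \<infinity> else ereal (\<delta> y ^ 2 / p y))"

definition diag_op :: "nat \<Rightarrow> (nat \<Rightarrow> real) \<Rightarrow> complex mat" where
  "diag_op N f = mat N N (\<lambda>(i,j). if i = j then complex_of_real (f i) else 0)"

definition Gmin :: "nat \<Rightarrow> nat \<Rightarrow> (complex mat \<Rightarrow> complex mat) \<Rightarrow> (complex mat \<Rightarrow> complex mat) \<Rightarrow> ereal" where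
  "Gmin n m \<Phi> \<Delta> = Sup { Jfi {0..<N}
        (\<lambda>y. Re (mtrace (tensor_id n m k \<Phi> \<rho> * M y)))
        (\<lambda>y. Re (mtrace (tensor_id n m k \<Delta> \<rho> * M y)))
      | k \<rho> N M. k > 0 \<and> density (n*k) \<rho> \<and> povm (m*k) N M }"

definition Gmax :: "nat \<Rightarrow> nat \<Rightarrow> (complex mat \<Rightarrow> complex mat) \<Rightarrow> (complex mat \<Rightarrow> complex mat) \<Rightarrow> ereal" where
  "Gmax n m \<Phi> \<Delta> = Inf { Jfi {0..<N} q \<delta>
      | N q \<delta> \<Lambda>. (\<forall>y<N. q y \<ge> 0) \<and> (\<Sum>y<N. q y) = 1 \<and> (\<Sum>y<N. \<delta> y) = 0 \<and>
          channel (n*N) m \<Lambda> \<and>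
          (\<forall>X \<in> carrier_mat n n. \<Phi> X = \<Lambda> (kron X (diag_op N q)) \<and>
                                  \<Delta> X = \<Lambda> (kron X (diag_op N \<delta>))) }"

definition pauliX :: "complex mat" where "pauliX = mat_of_rows_list 2 [[0,1],[1,0]]"
definition pauliY :: "complex mat" where "pauliY = mat_of_rows_list 2 [[0,-\<i>],[\<i>,0]]"
definition pauliZ :: "complex mat" where "pauliZ = mat_of_rows_list 2 [[1,0],[0,-1]]"

text \<open>Pauli channel with weights (1 - a - b - c, a, b, c); by linearity in the weights,
  the same expression with derivative weights gives d Lambda / d theta.\<close>
definition pauli_map :: "real \<Rightarrow> real \<Rightarrow> real \<Rightarrow> real \<Rightarrow> complex mat \<Rightarrow> complex mat" where
  "pauli_map w a b c \<rho> = complex_of_real w \<cdot>\<^sub>m \<rho>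
     + complex_of_real a \<cdot>\<^sub>m (pauliX * \<rho> * pauliX)
     + complex_of_real b \<cdot>\<^sub>m (pauliY * \<rho> * pauliY)
     + complex_of_real c \<cdot>\<^sub>m (pauliZ * \<rho> * pauliZ)"

end

theory Submission
  imports Defs
begin

definition QF :: "nat \<Rightarrow> (nat \<Rightarrow> nat \<Rightarrow> complex) \<Rightarrow> (nat \<Rightarrow> complex) \<Rightarrow> complex" where
  "QF d A f = (\<Sum>i<d. \<Sum>j<d. cnj (f i) * A i j * f j)"
definition fpsd :: "nat \<Rightarrow> (nat \<Rightarrow> nat \<Rightarrow> complex) \<Rightarrow> bool" where
  "fpsd d A \<longleftrightarrow> (\<forall>f. Im (QF d A f) = 0 \<and> Re (QF d A f) \<ge> 0)"

lemma psd_iff: "psd d A \<longleftrightarrow> A \<in> carrier_mat d d \<and> fpsd d (\<lambda>i j. A $$ (i,j))"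
proof -
  have key: "(A *\<^sub>v v) \<bullet> conjugate v = QF d (\<lambda>i j. A $$ (i,j)) (\<lambda>i. v $ i)"
    if "A \<in> carrier_mat d d" "v \<in> carrier_vec d" for v
    using that unfolding QF_def scalar_prod_def
    by (auto simp: atLeast0LessThan sum_distrib_left sum_distrib_right mult_ac scalar_prod_def intro!: sum.cong)
  show ?thesis
  proof
    assume p: "psd d A"
    have C: "A \<in> carrier_mat d d" using p unfolding psd_def by auto
    have "Im (QF d (\<lambda>i j. A $$ (i,j)) f) = 0 \<and> Re (QF d (\<lambda>i j. A $$ (i,j)) f) \<ge> 0" for f
    proof -
      have v: "vec d f \<in> carrier_vec d" by simp
      have e: "QF d (\<lambda>i j. A $$ (i,j)) (\<lambda>i. vec d f $ i) = QF d (\<lambda>i j. A $$ (i,j)) f"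
        unfolding QF_def by (auto intro!: sum.cong)
      from p v have "Im ((A *\<^sub>v vec d f) \<bullet> conjugate (vec d f)) = 0 \<and> Re ((A *\<^sub>v vec d f) \<bullet> conjugate (vec d f)) \<ge> 0"
        unfolding psd_def by blast
      then show ?thesis using key[OF C v] e by simp
    qed
    then show "A \<in> carrier_mat d d \<and> fpsd d (\<lambda>i j. A $$ (i,j))" using C unfolding fpsd_def by auto
  next
    assume "A \<in> carrier_mat d d \<and> fpsd d (\<lambda>i j. A $$ (i,j))"
    then show "psd d A" unfolding psd_def fpsd_def using key by auto
  qed
qed


definition BF :: "nat \<Rightarrow> (nat \<Rightarrow> nat \<Rightarrow> complex) \<Rightarrow> (nat \<Rightarrow> complex) \<Rightarrow> (nat \<Rightarrow> complex) \<Rightarrow> complex" where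
  "BF d A f g = (\<Sum>i<d. \<Sum>j<d. cnj (f i) * A i j * g j)"

definition ev :: "nat \<Rightarrow> nat \<Rightarrow> complex" where "ev t = (\<lambda>x. if x = t then 1 else 0)"

lemma QF_BF: "QF d A f = BF d A f f" unfolding QF_def BF_def ..

lemma BF_add_left: "BF d A (\<lambda>x. f x + g x) h = BF d A f h + BF d A g h"
  unfolding BF_def by (simp add: algebra_simps sum.distrib)
lemma BF_add_right: "BF d A h (\<lambda>x. f x + g x) = BF d A h f + BF d A h g"
  unfolding BF_def by (simp add: algebra_simps sum.distrib)
lemma BF_scale_left: "BF d A (\<lambda>x. c * f x) g = cnj c * BF d A f g"
  unfolding BF_def by (simp add: algebra_simps sum_distrib_left)
lemma BF_scale_right: "BF d A f (\<lambda>x. c * g x) = c * BF d A f g"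
  unfolding BF_def by (simp add: algebra_simps sum_distrib_left)


lemma BF_alt: "BF d A f g = (\<Sum>i<d. cnj (f i) * (\<Sum>j<d. A i j * g j))"
  unfolding BF_def by (simp add: sum_distrib_left mult.assoc)
lemma BF_alt2: "BF d A f g = (\<Sum>j<d. (\<Sum>i<d. cnj (f i) * A i j) * g j)"
  unfolding BF_def by (subst sum.swap) (simp add: sum_distrib_right mult.assoc)
lemma sum_ev1: "t < (d::nat) \<Longrightarrow> (\<Sum>i<d. (if i = t then 1 else 0) * (X i::complex)) = X t"
proof -
  assume t: "t < d"
  have "(\<Sum>i<d. (if i = t then 1 else 0) * X i) = (\<Sum>i<d. if i = t then X i else 0)"
    by (rule sum.cong) auto
  also have "\<dots> = X t" using t by (simp add: sum.delta')
  finally show ?thesis .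
qed
lemma sum_ev2: "t < (d::nat) \<Longrightarrow> (\<Sum>i<d. (X i::complex) * (if i = t then 1 else 0)) = X t"
  using sum_ev1[of t d X] by (simp add: mult.commute)
lemma cnj_ev: "cnj (ev t i) = ev t i" by (simp add: ev_def)

lemma BF_ev_left: "t < d \<Longrightarrow> BF d A (ev t) g = (\<Sum>j<d. A t j * g j)"
  unfolding BF_alt cnj_ev unfolding ev_def by (rule sum_ev1)
lemma BF_ev_right: "t < d \<Longrightarrow> BF d A f (ev t) = (\<Sum>i<d. cnj (f i) * A i t)"
  unfolding BF_alt2 unfolding ev_def by (rule sum_ev2)
lemma BF_ev_ev: "s < d \<Longrightarrow> t < d \<Longrightarrow> BF d A (ev s) (ev t) = A s t"
  by (simp add: BF_ev_left) (simp add: ev_def sum_ev2)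


lemma fpsd_herm:
  assumes "fpsd d A" "i < d" "j < d"
  shows "A j i = cnj (A i j)"
proof -
  have q: "Im (BF d A f f) = 0" for f using assms(1) unfolding fpsd_def QF_BF by auto
  have ii: "Im (A i i) = 0" using q[of "ev i"] BF_ev_ev assms by simp
  have jj: "Im (A j j) = 0" using q[of "ev j"] BF_ev_ev assms by simp
  have "BF d A (\<lambda>x. ev i x + ev j x) (\<lambda>x. ev i x + ev j x) = A i i + A i j + A j i + A j j"
    using assms by (simp only: BF_add_left BF_add_right BF_ev_ev) simp
  with q[of "\<lambda>x. ev i x + ev j x"] ii jj have 1: "Im (A i j) + Im (A j i) = 0" by simp
  have "BF d A (\<lambda>x. ev i x + \<i> * ev j x) (\<lambda>x. ev i x + \<i> * ev j x) = A i i + \<i> * A i j - \<i> * A j i + A j j"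
    using assms by (simp only: BF_add_left BF_add_right BF_scale_left BF_scale_right BF_ev_ev) simp
  with q[of "\<lambda>x. ev i x + \<i> * ev j x"] ii jj have 2: "Re (A i j) - Re (A j i) = 0" by simp
  from 1 2 show ?thesis by (simp add: complex_eq_iff)
qed

lemma BF_herm:
  assumes "\<And>i j. i < d \<Longrightarrow> j < d \<Longrightarrow> A j i = cnj (A i j)"
  shows "BF d A g f = cnj (BF d A f g)"
proof -
  have "BF d A g f = (\<Sum>j<d. \<Sum>i<d. cnj (g i) * A i j * f j)" unfolding BF_def by (rule sum.swap)
  also have "\<dots> = (\<Sum>j<d. \<Sum>i<d. cnj (cnj (f j) * A j i * g i))"
  proof (rule sum.cong[OF refl], rule sum.cong[OF refl])
    fix i j assume "i \<in> {..<d}" "j \<in> {..<d}"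
    then have e: "cnj (A i j) = A j i" using assms[of i j] by simp
    have "cnj (cnj (f i) * A i j * g j) = f i * cnj (A i j) * cnj (g j)" by simp
    then show "cnj (g j) * A j i * f i = cnj (cnj (f i) * A i j * g j)" using e by (simp add: mult_ac)
  qed
  also have "\<dots> = cnj (BF d A f g)" unfolding BF_def cnj_sum ..
  finally show ?thesis .
qed



lemma fpsd_BF: "fpsd d A \<Longrightarrow> Im (BF d A f f) = 0 \<and> Re (BF d A f f) \<ge> 0"
  unfolding fpsd_def QF_BF by auto

lemma fpsd_diag: "fpsd d A \<Longrightarrow> t < d \<Longrightarrow> A t t = of_real (Re (A t t)) \<and> Re (A t t) \<ge> 0"
  using fpsd_BF[of d A "ev t"] BF_ev_ev[of t d t A] by (simp add: complex_eq_iff)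

lemma fpsd_CS:
  assumes A: "fpsd d A" and t: "t < d"
  shows "(cmod (BF d A (ev t) f))^2 \<le> Re (A t t) * Re (BF d A f f)"
proof -
  define c where "c = BF d A (ev t) f"
  define a where "a = Re (A t t)"
  define n where "n = (cmod c)^2"
  define Q where "Q = Re (BF d A f f)"
  have herm: "\<And>i j. i < d \<Longrightarrow> j < d \<Longrightarrow> A j i = cnj (A i j)" using fpsd_herm[OF A] by blast
  have att: "A t t = of_real a" "a \<ge> 0" using fpsd_diag[OF A t] a_def by auto
  have cc: "c * cnj c = of_real n" unfolding n_def using complex_norm_square by simp
  have fe: "BF d A f (ev t) = cnj c" unfolding c_def by (rule BF_herm[OF herm])
  have ee: "BF d A (ev t) (ev t) = of_real a" using BF_ev_ev[OF t t] att by simp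
  have key: "Q - 2*x*n + x^2*n*a \<ge> 0" for x :: real
  proof -
    define \<alpha> where "\<alpha> = - (of_real x) * c"
    let ?g = "\<lambda>y. f y + \<alpha> * ev t y"
    have "BF d A ?g ?g = BF d A f f + \<alpha> * BF d A f (ev t) + cnj \<alpha> * BF d A (ev t) f + cnj \<alpha> * (\<alpha> * BF d A (ev t) (ev t))"
      by (simp only: BF_add_left BF_add_right BF_scale_left BF_scale_right) (simp add: algebra_simps)
    also have "\<dots> = BF d A f f - 2 * of_real x * (c * cnj c) + of_real x ^2 * (c * cnj c) * of_real a"
      unfolding fe ee c_def[symmetric] \<alpha>_def by (simp add: algebra_simps power2_eq_square)
    also have "\<dots> = BF d A f f + of_real (- 2*x*n + x^2*n*a)" unfolding cc by simp
    finally have "Re (BF d A ?g ?g) = Q - 2*x*n + x^2*n*a" unfolding Q_def by simp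
    then show ?thesis using fpsd_BF[OF A, of ?g] by simp
  qed
  have n0: "n \<ge> 0" unfolding n_def by simp
  show ?thesis
  proof (cases "a = 0")
    case True
    have "n = 0"
    proof (rule ccontr)
      assume "n \<noteq> 0" then have np: "n > 0" using n0 by simp
      have "Q - 2*((Q+1)/(2*n))*n + ((Q+1)/(2*n))^2*n*a \<ge> 0" by (rule key)
      with True np show False by (simp add: field_simps)
    qed
    then show ?thesis using True fpsd_BF[OF A, of f] unfolding n_def a_def c_def by simp
  next
    case False
    then have ap: "a > 0" using att by simp
    have "Q - 2*(1/a)*n + (1/a)^2*n*a \<ge> 0" by (rule key)
    then have "Q - n/a \<ge> 0" using ap by (simp add: field_simps power2_eq_square)
    then have "n \<le> a * Q" using ap by (simp add: field_simps)
    then show ?thesis unfolding n_def a_def Q_def c_def .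
  qed
qed



definition TR :: "nat \<Rightarrow> (nat \<Rightarrow> nat \<Rightarrow> complex) \<Rightarrow> (nat \<Rightarrow> nat \<Rightarrow> complex) \<Rightarrow> complex" where
  "TR d A B = (\<Sum>i<d. \<Sum>j<d. A i j * B j i)"

lemma rank1_BF: "BF d (\<lambda>i j. w i * cnj (w j)) f f = (\<Sum>i<d. cnj (f i) * w i) * cnj (\<Sum>i<d. cnj (f i) * w i)"
  unfolding BF_def cnj_sum sum_product
  by (rule sum.cong[OF refl], rule sum.cong[OF refl]) (simp add: mult_ac)

lemma TR_split: "TR d A B = TR d (\<lambda>i j. A i j - w i * cnj (w j)) B + BF d B w w"
proof -
  have "BF d B w w = (\<Sum>i<d. \<Sum>j<d. w i * cnj (w j) * B j i)"
    unfolding BF_def by (subst sum.swap) (simp add: mult_ac)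
  then show ?thesis unfolding TR_def by (simp add: algebra_simps sum.distrib[symmetric] sum_subtractf)
qed

lemma trace_ind:
  assumes B: "fpsd d B"
  shows "\<forall>A. fpsd d A \<longrightarrow> (\<forall>i<d. \<forall>j<d. (i < d - s \<or> j < d - s) \<longrightarrow> A i j = 0) \<longrightarrow> 0 \<le> Re (TR d A B)"
proof (induction s)
  case 0
  show ?case by (auto simp: TR_def)
next
  case (Suc s)
  show ?case
  proof (intro allI impI)
    fix A assume A: "fpsd d A" and Z: "\<forall>i<d. \<forall>j<d. (i < d - Suc s \<or> j < d - Suc s) \<longrightarrow> A i j = 0"
    show "0 \<le> Re (TR d A B)"
    proof (cases "d \<le> s")
      case True
      then have "d - Suc s = d - s" by simp
      then show ?thesis using Suc.IH A Z by metis
    next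
      case False
      define t where "t = d - Suc s"
      have t: "t < d" and ds: "d - s = Suc t" using False unfolding t_def by auto
      have herm: "\<And>i j. i < d \<Longrightarrow> j < d \<Longrightarrow> A j i = cnj (A i j)" using fpsd_herm[OF A] by blast
      have att: "A t t = of_real (Re (A t t))" "Re (A t t) \<ge> 0" using fpsd_diag[OF A t] by auto
      show ?thesis
      proof (cases "Re (A t t) = 0")
        case True
        have row: "A t j = 0" if j: "j < d" for j
        proof -
          have "(cmod (BF d A (ev t) (ev j)))^2 \<le> 0" using fpsd_CS[OF A t, of "ev j"] True by simp
          then show ?thesis using BF_ev_ev[OF t j, of A] by simp
        qed
        have col: "A j t = 0" if j: "j < d" for j using herm[OF t j] row[OF j] by simp
        have "\<forall>i<d. \<forall>j<d. (i < d - s \<or> j < d - s) \<longrightarrow> A i j = 0"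
          unfolding ds using Z row col unfolding t_def[symmetric] by (auto simp: less_Suc_eq)
        then show ?thesis using Suc.IH A by blast
      next
        case False
        define a where "a = Re (A t t)"
        have ap: "a > 0" using False att unfolding a_def by simp
        define w where "w i = A i t / of_real (sqrt a)" for i
        define A' where "A' i j = A i j - w i * cnj (w j)" for i j
        have sq: "of_real (sqrt a) * of_real (sqrt a) = (of_real a :: complex)"
          using ap by (metis of_real_mult real_sqrt_mult_self abs_of_pos)
        have wt: "w t * cnj (w j) = A t j" if j: "j < d" for j
        proof -
          have "w t * cnj (w j) = A t t * cnj (A j t) / (of_real (sqrt a) * of_real (sqrt a))"
            unfolding w_def by simp
          also have "\<dots> = A t t * A t j / of_real a" using herm[OF t j] sq by simp
          also have "\<dots> = A t j" using att ap unfolding a_def[symmetric] by simp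
          finally show ?thesis .
        qed
        have wt2: "w j * cnj (w t) = A j t" if j: "j < d" for j
          using arg_cong[OF wt[OF j], of cnj] herm[OF t j] by (simp add: mult.commute)
        have A'psd: "fpsd d A'"
          unfolding fpsd_def QF_BF
        proof
          fix f
          define c where "c = BF d A (ev t) f"
          have z: "cnj (\<Sum>i<d. cnj (f i) * w i) = c / of_real (sqrt a)"
          proof -
            have "cnj (\<Sum>i<d. cnj (f i) * w i) = (\<Sum>i<d. f i * A t i) / of_real (sqrt a)"
              unfolding w_def cnj_sum sum_divide_distrib
              by (rule sum.cong[OF refl]) (simp add: herm[OF t])
            then show ?thesis unfolding c_def BF_ev_left[OF t] by (simp add: mult.commute)
          qed
          have "BF d A' f f = BF d A f f - BF d (\<lambda>i j. w i * cnj (w j)) f f"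
            unfolding A'_def BF_def by (simp add: algebra_simps sum_subtractf)
          also have "BF d (\<lambda>i j. w i * cnj (w j)) f f = of_real ((cmod c)^2 / a)"
          proof -
            have "BF d (\<lambda>i j. w i * cnj (w j)) f f = cnj (c / of_real (sqrt a)) * (c / of_real (sqrt a))"
              unfolding rank1_BF using z by (metis complex_cnj_cnj)
            also have "\<dots> = (cnj c * c) / (of_real (sqrt a) * of_real (sqrt a))" by simp
            also have "\<dots> = of_real ((cmod c)^2 / a)" unfolding sq
              by (simp add: complex_norm_square[symmetric] mult.commute)
            finally show ?thesis .
          qed
          finally have e: "BF d A' f f = BF d A f f - of_real ((cmod c)^2 / a)" .
          have cs: "(cmod c)^2 \<le> a * Re (BF d A f f)" using fpsd_CS[OF A t, of f] unfolding c_def a_def .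
          have "(cmod c)^2 / a \<le> Re (BF d A f f)" using cs ap by (simp add: field_simps)
          then show "Im (BF d A' f f) = 0 \<and> 0 \<le> Re (BF d A' f f)" using e fpsd_BF[OF A, of f] by simp
        qed
        have "\<forall>i<d. \<forall>j<d. (i < d - s \<or> j < d - s) \<longrightarrow> A' i j = 0"
        proof (intro allI impI)
          fix i j assume i: "i < d" and j: "j < d" and ij: "i < d - s \<or> j < d - s"
          show "A' i j = 0"
          proof (cases "i = t \<or> j = t")
            case True
            then show ?thesis
            proof
              assume "i = t" then show ?thesis unfolding A'_def using wt[OF j] by simp
            next
              assume "j = t" then show ?thesis unfolding A'_def using wt2[OF i] by simp
            qed
          next
            case False
            then have lt: "i < t \<or> j < t" using ij ds by auto
            have wz: "w x = 0" if "x < t" for x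
              using Z that t unfolding w_def t_def[symmetric] by auto
            have "A i j = 0" using Z i j lt unfolding t_def[symmetric] by auto
            then show ?thesis unfolding A'_def using lt wz by auto
          qed
        qed
        then have "0 \<le> Re (TR d A' B)" using Suc.IH A'psd by blast
        moreover have "0 \<le> Re (BF d B w w)" using fpsd_BF[OF B] by blast
        ultimately show ?thesis using TR_split[of d A B w] unfolding A'_def[abs_def] by simp
      qed
    qed
  qed
qed

lemma fpsd_trace: "fpsd d A \<Longrightarrow> fpsd d B \<Longrightarrow> 0 \<le> Re (TR d A B)"
  using trace_ind[of d B d] by auto



lemma classical_key:
  fixes q \<delta> r :: "nat \<Rightarrow> real" and N :: nat
  assumes q: "\<And>y. y < N \<Longrightarrow> q y \<ge> 0" and r: "\<And>y. y < N \<Longrightarrow> r y \<ge> 0"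
    and z: "\<And>y. y < N \<Longrightarrow> q y = 0 \<Longrightarrow> \<delta> y = 0"
    and p: "(\<Sum>y<N. q y * r y) > 0"
  shows "(\<Sum>y<N. \<delta> y * r y)^2 / (\<Sum>y<N. q y * r y) \<le> (\<Sum>y<N. \<delta> y ^2 / q y * r y)"
proof -
  define P where "P = (\<Sum>y<N. q y * r y)"
  define D where "D = (\<Sum>y<N. \<delta> y * r y)"
  define S where "S = (\<Sum>y<N. \<delta> y ^2 / q y * r y)"
  define c where "c = D / P"
  have t: "r y * (\<delta> y - c * q y)^2 / q y = \<delta> y ^2 / q y * r y - 2 * c * (\<delta> y * r y) + c^2 * (q y * r y)"
    if y: "y < N" for y
  proof (cases "q y = 0")
    case True then show ?thesis using z[OF y] by simp
  next
    case False then show ?thesis by (simp add: field_simps power2_eq_square)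
  qed
  have "0 \<le> (\<Sum>y<N. r y * (\<delta> y - c * q y)^2 / q y)"
    by (rule sum_nonneg) (simp add: q r)
  also have "\<dots> = S - 2 * c * D + c^2 * P"
    unfolding S_def D_def P_def using t
    by (simp add: sum.distrib sum_subtractf sum_distrib_left)
  also have "\<dots> = S - D^2 / P" unfolding c_def using p unfolding P_def[symmetric]
    by (simp add: field_simps power2_eq_square)
  finally show ?thesis unfolding S_def D_def P_def by simp
qed

lemma classical_DP:
  fixes q \<delta> :: "nat \<Rightarrow> real" and r :: "nat \<Rightarrow> nat \<Rightarrow> real"
  assumes q: "\<And>y. y < N \<Longrightarrow> q y \<ge> 0"
    and r: "\<And>y y'. y < N \<Longrightarrow> y' < N' \<Longrightarrow> r y y' \<ge> 0"
    and r1: "\<And>y. y < N \<Longrightarrow> (\<Sum>y'<N'. r y y') = 1"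
    and p: "\<And>y'. y' < N' \<Longrightarrow> p y' = (\<Sum>y<N. q y * r y y')"
    and d: "\<And>y'. y' < N' \<Longrightarrow> dd y' = (\<Sum>y<N. \<delta> y * r y y')"
  shows "Jfi {0..<N'} p dd \<le> Jfi {0..<N} q \<delta>"
proof (cases "\<exists>y<N. \<delta> y \<noteq> 0 \<and> q y = 0")
  case True
  then obtain y0 where y0: "y0 < N" "\<delta> y0 \<noteq> 0" "q y0 = 0" by blast
  have "Jfi {0..<N} q \<delta> = \<infinity>" unfolding Jfi_def
    by (subst sum_Pinfty) (use y0 in auto)
  then show ?thesis by simp
next
  case False
  then have z: "\<And>y. y < N \<Longrightarrow> q y = 0 \<Longrightarrow> \<delta> y = 0" by blast
  have R: "Jfi {0..<N} q \<delta> = ereal (\<Sum>y<N. \<delta> y ^2 / q y)" unfolding Jfi_def atLeast0LessThan sum_ereal[symmetric]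
    by (rule sum.cong[OF refl]) (use z in auto)
  have tm: "(if dd y' = 0 then 0 else if p y' = 0 then \<infinity> else ereal (dd y' ^ 2 / p y'))
      \<le> ereal (\<Sum>y<N. \<delta> y ^2 / q y * r y y')" if y': "y' < N'" for y'
  proof -
    have nn: "0 \<le> (\<Sum>y<N. \<delta> y ^2 / q y * r y y')"
      by (rule sum_nonneg) (simp add: q r y')
    show ?thesis
    proof (cases "dd y' = 0")
      case True then show ?thesis using nn by simp
    next
      case False
      have pp: "p y' > 0"
      proof (rule ccontr)
        assume "\<not> p y' > 0"
        moreover have "p y' \<ge> 0" unfolding p[OF y'] by (rule sum_nonneg) (simp add: q r y')
        ultimately have "(\<Sum>y<N. q y * r y y') = 0" using p[OF y'] by simp
        then have e: "\<forall>y\<in>{..<N}. q y * r y y' = 0"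
          by (subst sum_nonneg_eq_0_iff[symmetric]) (auto simp: q r y')
        have "dd y' = 0" unfolding d[OF y']
          by (rule sum.neutral) (use e z in auto)
        with False show False by simp
      qed
      have "dd y' ^ 2 / p y' \<le> (\<Sum>y<N. \<delta> y ^2 / q y * r y y')"
        using classical_key[of N q "\<lambda>y. r y y'" \<delta>] pp q r[OF _ y'] z
        unfolding p[OF y'] d[OF y'] by auto
      then show ?thesis using False pp by simp
    qed
  qed
  have "Jfi {0..<N'} p dd \<le> (\<Sum>y'<N'. ereal (\<Sum>y<N. \<delta> y ^2 / q y * r y y'))"
    unfolding Jfi_def atLeast0LessThan by (rule sum_mono) (use tm in auto)
  also have "\<dots> = ereal (\<Sum>y<N. \<delta> y ^2 / q y * (\<Sum>y'<N'. r y y'))"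
    by (simp add: sum_distrib_left) (rule sum.swap)
  also have "\<dots> = ereal (\<Sum>y<N. \<delta> y ^2 / q y)" using r1 by simp
  finally show ?thesis unfolding R .
qed



lemma sum_split: "(\<Sum>s<(a::nat)*(b::nat). f s) = (\<Sum>i<a. \<Sum>j<b. f (i*b+j)::'c::comm_monoid_add)"
proof -
  have "(\<Sum>s<a*b. f s) = (\<Sum>i<a. sum f {i*b..<i*b+b})" using sum.nat_group[of f b a] by simp
  also have "\<dots> = (\<Sum>i<a. \<Sum>j<b. f (i*b+j))"
  proof (rule sum.cong[OF refl])
    fix i
    have "sum f {0 + i*b..<b + i*b} = (\<Sum>j\<in>{0..<b}. f (j + i*b))" by (rule sum.shift_bounds_nat_ivl)
    then show "sum f {i*b..<i*b+b} = (\<Sum>j<b. f (i*b+j))" by (simp add: atLeast0LessThan add.commute)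
  qed
  finally show ?thesis .
qed

lemma dm_simps: "(r::nat) < k \<Longrightarrow> (a*k+r) div k = a" "(r::nat) < k \<Longrightarrow> (a*k+r) mod k = r"
  by auto

lemma lt_mult_idx: "(i::nat) < a \<Longrightarrow> j < b \<Longrightarrow> i*b+j < a*b"
proof -
  assume "i < a" "j < b"
  then have "i*b + j < i*b + b" by simp
  also have "\<dots> = (i+1)*b" by simp
  also have "\<dots> \<le> a*b" using \<open>i < a\<close> by (intro mult_right_mono) auto
  finally show ?thesis .
qed

definition Emat :: "nat \<Rightarrow> nat \<Rightarrow> nat \<Rightarrow> complex mat" where
  "Emat n i j = mat n n (\<lambda>(u,v). if u = i \<and> v = j then 1 else 0)"

lemma channel_carrier: "channel n m \<Lambda> \<Longrightarrow> X \<in> carrier_mat n n \<Longrightarrow> \<Lambda> X \<in> carrier_mat m m"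
  unfolding channel_def by blast
lemma channel_lin: "channel n m \<Lambda> \<Longrightarrow> X \<in> carrier_mat n n \<Longrightarrow> Y \<in> carrier_mat n n \<Longrightarrow> \<Lambda> (a \<cdot>\<^sub>m X + Y) = a \<cdot>\<^sub>m \<Lambda> X + \<Lambda> Y"
  unfolding channel_def by blast
lemma channel_tp: "channel n m \<Lambda> \<Longrightarrow> X \<in> carrier_mat n n \<Longrightarrow> mtrace (\<Lambda> X) = mtrace X"
  unfolding channel_def by blast
lemma channel_cp: "channel n m \<Lambda> \<Longrightarrow> k > 0 \<Longrightarrow> psd (n*k) \<rho> \<Longrightarrow> psd (m*k) (tensor_id n m k \<Lambda> \<rho>)"
  unfolding channel_def by blast

lemma channel_zero: assumes ch: "channel n m \<Lambda>" and a: "a < m" and b: "b < m"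
  shows "\<Lambda> (0\<^sub>m n n) $$ (a,b) = 0"
proof -
  have z: "0\<^sub>m n n \<in> carrier_mat n n" by simp
  have "\<Lambda> (1 \<cdot>\<^sub>m 0\<^sub>m n n + 0\<^sub>m n n) = 1 \<cdot>\<^sub>m \<Lambda> (0\<^sub>m n n) + \<Lambda> (0\<^sub>m n n)" by (rule channel_lin[OF ch z z])
  then have "\<Lambda> (0\<^sub>m n n) $$ (a,b) = (1 \<cdot>\<^sub>m \<Lambda> (0\<^sub>m n n) + \<Lambda> (0\<^sub>m n n)) $$ (a,b)" by simp
  also have "\<dots> = \<Lambda> (0\<^sub>m n n) $$ (a,b) + \<Lambda> (0\<^sub>m n n) $$ (a,b)"
    using channel_carrier[OF ch z] a b by simp
  finally show ?thesis by simp
qed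

lemma choi:
  assumes ch: "channel n m \<Lambda>" and X: "X \<in> carrier_mat n n" and a: "a < m" and b: "b < m"
  shows "\<Lambda> X $$ (a,b) = (\<Sum>i<n. \<Sum>j<n. X $$ (i,j) * \<Lambda> (Emat n i j) $$ (a,b))"
proof -
  define Xt where "Xt t = mat n n (\<lambda>(u,v). if u*n+v < t then X $$ (u,v) else 0)" for t
  have Xt: "Xt t \<in> carrier_mat n n" for t unfolding Xt_def by simp
  have E: "Emat n i j \<in> carrier_mat n n" for i j unfolding Emat_def by simp
  have ind: "t \<le> n*n \<Longrightarrow> \<Lambda> (Xt t) $$ (a,b) = (\<Sum>s<t. X $$ (s div n, s mod n) * \<Lambda> (Emat n (s div n) (s mod n)) $$ (a,b))" for t
  proof (induction t)
    case 0
    have "Xt 0 = 0\<^sub>m n n" unfolding Xt_def by auto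
    then show ?case using channel_zero[OF ch a b] by simp
  next
    case (Suc t)
    then have tn: "t < n*n" by simp
    then have n0: "n > 0" by (cases n) auto
    define i where "i = t div n"
    define j where "j = t mod n"
    have ij: "i < n" "j < n" "i*n+j = t" using tn n0 unfolding i_def j_def
      by (auto simp: less_mult_imp_div_less)
    have "Xt (Suc t) = X $$ (i,j) \<cdot>\<^sub>m Emat n i j + Xt t"
    proof (rule eq_matI)
      fix u v assume u: "u < dim_row (X $$ (i,j) \<cdot>\<^sub>m Emat n i j + Xt t)" and v: "v < dim_col (X $$ (i,j) \<cdot>\<^sub>m Emat n i j + Xt t)"
      then have u: "u < n" and v: "v < n" unfolding Emat_def Xt_def by auto
      have "u*n+v = t \<longleftrightarrow> u = i \<and> v = j"
      proof
        assume h: "u*n+v = t"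
        then show "u = i \<and> v = j" unfolding i_def j_def using v by auto
      qed (use ij in auto)
      then show "Xt (Suc t) $$ (u,v) = (X $$ (i,j) \<cdot>\<^sub>m Emat n i j + Xt t) $$ (u,v)"
        unfolding Xt_def Emat_def using u v by auto
    qed (auto simp: Xt_def Emat_def)
    then have "\<Lambda> (Xt (Suc t)) = X $$ (i,j) \<cdot>\<^sub>m \<Lambda> (Emat n i j) + \<Lambda> (Xt t)"
      using channel_lin[OF ch E Xt] by simp
    then have "\<Lambda> (Xt (Suc t)) $$ (a,b) = X $$ (i,j) * \<Lambda> (Emat n i j) $$ (a,b) + \<Lambda> (Xt t) $$ (a,b)"
      using channel_carrier[OF ch E, of i j] channel_carrier[OF ch Xt, of t] a b by (simp add: carrier_matD)
    then show ?case using Suc tn unfolding i_def j_def by simp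
  qed
  have "Xt (n*n) = X"
  proof (rule eq_matI)
    fix u v assume "u < dim_row X" "v < dim_col X"
    then have "u < n" "v < n" using X by auto
    then have "u*n+v < n*n" by (rule lt_mult_idx)
    then show "Xt (n*n) $$ (u,v) = X $$ (u,v)" unfolding Xt_def using \<open>u < n\<close> \<open>v < n\<close> by simp
  qed (use X in \<open>auto simp: Xt_def\<close>)
  then have "\<Lambda> X $$ (a,b) = (\<Sum>s<n*n. X $$ (s div n, s mod n) * \<Lambda> (Emat n (s div n) (s mod n)) $$ (a,b))"
    using ind[of "n*n"] by simp
  also have "\<dots> = (\<Sum>i<n. \<Sum>j<n. X $$ (i,j) * \<Lambda> (Emat n i j) $$ (a,b))"
    unfolding sum_split by (rule sum.cong[OF refl], rule sum.cong[OF refl]) simp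
  finally show ?thesis .
qed

lemma tensor_choi:
  assumes ch: "channel n m \<Lambda>" and u: "u < m*k" and v: "v < m*k"
  shows "tensor_id n m k \<Lambda> \<sigma> $$ (u,v) = (\<Sum>i<n. \<Sum>j<n. \<sigma> $$ (i*k + u mod k, j*k + v mod k) * \<Lambda> (Emat n i j) $$ (u div k, v div k))"
proof -
  have k: "k > 0" using u by (cases k) auto
  have a: "u div k < m" "v div k < m" using u v k by (auto simp: less_mult_imp_div_less)
  show ?thesis unfolding tensor_id_def using u v
    by (simp add: choi[OF ch _ a])
qed

lemma mtrace_mult: "A \<in> carrier_mat d d \<Longrightarrow> B \<in> carrier_mat d d \<Longrightarrow> mtrace (A * B) = TR d (\<lambda>i j. A $$ (i,j)) (\<lambda>i j. B $$ (i,j))"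
  unfolding mtrace_def TR_def by (simp add: scalar_prod_def atLeast0LessThan)

lemma psd_trace: "psd d A \<Longrightarrow> psd d B \<Longrightarrow> 0 \<le> Re (mtrace (A * B))"
  unfolding psd_iff using mtrace_mult[of A d B] fpsd_trace[of d "\<lambda>i j. A $$ (i,j)" "\<lambda>i j. B $$ (i,j)"] by simp



lemma sum4_swap: "(\<Sum>u<a. \<Sum>v<b. \<Sum>x<c. \<Sum>x'<d. T u v x x') = (\<Sum>x<c. \<Sum>x'<d. \<Sum>u<a. \<Sum>v<b. (T u v x x' :: 'z::comm_monoid_add))"
proof -
  have "(\<Sum>u<a. \<Sum>v<b. \<Sum>x<c. \<Sum>x'<d. T u v x x') = (\<Sum>u<a. \<Sum>x<c. \<Sum>v<b. \<Sum>x'<d. T u v x x')"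
    by (rule sum.cong[OF refl]) (rule sum.swap)
  also have "\<dots> = (\<Sum>u<a. \<Sum>x<c. \<Sum>x'<d. \<Sum>v<b. T u v x x')"
    by (rule sum.cong[OF refl], rule sum.cong[OF refl]) (rule sum.swap)
  also have "\<dots> = (\<Sum>x<c. \<Sum>u<a. \<Sum>x'<d. \<Sum>v<b. T u v x x')" by (rule sum.swap)
  also have "\<dots> = (\<Sum>x<c. \<Sum>x'<d. \<Sum>u<a. \<Sum>v<b. T u v x x')"
    by (rule sum.cong[OF refl]) (rule sum.swap)
  finally show ?thesis .
qed

lemma kraus_BF:
  "BF d2 (\<lambda>u v. \<Sum>x<d1. \<Sum>x'<d1. K u x * A x x' * cnj (K v x')) f f
   = BF d1 A (\<lambda>x. \<Sum>u<d2. cnj (K u x) * f u) (\<lambda>x. \<Sum>u<d2. cnj (K u x) * f u)"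
proof -
  have "BF d2 (\<lambda>u v. \<Sum>x<d1. \<Sum>x'<d1. K u x * A x x' * cnj (K v x')) f f
     = (\<Sum>u<d2. \<Sum>v<d2. \<Sum>x<d1. \<Sum>x'<d1. cnj (f u) * (K u x * A x x' * cnj (K v x')) * f v)"
    unfolding BF_def by (simp add: sum_distrib_left sum_distrib_right)
  also have "\<dots> = (\<Sum>x<d1. \<Sum>x'<d1. \<Sum>u<d2. \<Sum>v<d2. cnj (f u) * (K u x * A x x' * cnj (K v x')) * f v)"
    by (rule sum4_swap)
  also have "\<dots> = BF d1 A (\<lambda>x. \<Sum>u<d2. cnj (K u x) * f u) (\<lambda>x. \<Sum>u<d2. cnj (K u x) * f u)"
    unfolding BF_def cnj_sum
    by (rule sum.cong[OF refl], rule sum.cong[OF refl]) (simp add: sum_distrib_left sum_distrib_right mult_ac)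
  finally show ?thesis .
qed

lemma kraus_fpsd: "fpsd d1 A \<Longrightarrow> fpsd d2 (\<lambda>u v. \<Sum>x<d1. \<Sum>x'<d1. K u x * A x x' * cnj (K v x'))"
  unfolding fpsd_def QF_BF kraus_BF by blast

lemma fpsd_sum: "(\<And>l. l < L \<Longrightarrow> fpsd d (A l)) \<Longrightarrow> fpsd d (\<lambda>u v. \<Sum>l<L. A l u v)"
proof -
  assume a: "\<And>l. l < L \<Longrightarrow> fpsd d (A l)"
  have e: "BF d (\<lambda>u v. \<Sum>l<L. A l u v) f f = (\<Sum>l<L. BF d (A l) f f)" for f
  proof -
    have "BF d (\<lambda>u v. \<Sum>l<L. A l u v) f f = (\<Sum>u<d. \<Sum>v<d. \<Sum>l<L. cnj (f u) * A l u v * f v)"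
      unfolding BF_def by (simp add: sum_distrib_left sum_distrib_right)
    also have "\<dots> = (\<Sum>u<d. \<Sum>l<L. \<Sum>v<d. cnj (f u) * A l u v * f v)"
      by (rule sum.cong[OF refl]) (rule sum.swap)
    also have "\<dots> = (\<Sum>l<L. BF d (A l) f f)" unfolding BF_def by (rule sum.swap)
    finally show ?thesis .
  qed
  show ?thesis unfolding fpsd_def QF_BF e
    using a unfolding fpsd_def QF_BF by (auto simp: Im_sum Re_sum intro: sum_nonneg)
qed

lemma fpsd_cong: "fpsd d A \<Longrightarrow> (\<And>u v. u < d \<Longrightarrow> v < d \<Longrightarrow> A u v = B u v) \<Longrightarrow> fpsd d B"
proof -
  assume a: "fpsd d A" and e: "\<And>u v. u < d \<Longrightarrow> v < d \<Longrightarrow> A u v = B u v"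
  have "BF d A f f = BF d B f f" for f unfolding BF_def using e by (auto intro!: sum.cong)
  then show ?thesis using a unfolding fpsd_def QF_BF by simp
qed



definition sig :: "nat \<Rightarrow> nat \<Rightarrow> nat \<Rightarrow> nat \<Rightarrow> complex mat \<Rightarrow> complex mat" where
  "sig n N k y \<rho> = mat (n*N*k) (n*N*k) (\<lambda>(u,v). if (u div k) mod N = y \<and> (v div k) mod N = y
      then \<rho> $$ (((u div k) div N)*k + u mod k, ((v div k) div N)*k + v mod k) else 0)"

lemma sig_entry:
  assumes "I < n*N" "J < n*N" "r < k" "s < k"
  shows "sig n N k y \<rho> $$ (I*k+r, J*k+s) = (if I mod N = y \<and> J mod N = y then \<rho> $$ ((I div N)*k + r, (J div N)*k + s) else 0)"
proof -
  have "I*k+r < n*N*k" "J*k+s < n*N*k" using assms lt_mult_idx by auto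
  then show ?thesis unfolding sig_def using assms by simp
qed

lemma emb_iff:
  fixes x y N k u :: nat
  assumes "y < N" "k > 0"
  shows "(((x div k)*N + y)*k + x mod k = u) \<longleftrightarrow> ((u div k) mod N = y \<and> x = ((u div k) div N)*k + u mod k)"
proof
  assume h: "((x div k)*N + y)*k + x mod k = u"
  have xm: "x mod k < k" using assms(2) by (rule mod_less_divisor)
  have "u div k = (x div k)*N + y" "u mod k = x mod k" using h dm_simps[OF xm] by auto
  then show "(u div k) mod N = y \<and> x = ((u div k) div N)*k + u mod k" using assms by auto
next
  assume h: "(u div k) mod N = y \<and> x = ((u div k) div N)*k + u mod k"
  then have "x div k = (u div k) div N" "x mod k = u mod k" using assms by auto
  then show "((x div k)*N + y)*k + x mod k = u" using h
    by (metis div_mult_mod_eq)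
qed

lemma sum_pick:
  assumes "x0 < (d::nat)"
  shows "(\<Sum>x<d. (if x = x0 \<and> P then 1 else 0) * F x) = (if P then F x0 else (0::complex))"
proof -
  have "(\<Sum>x<d. (if x = x0 \<and> P then 1 else 0) * F x) = (\<Sum>x<d. if x = x0 then (if P then F x else 0) else 0)"
    by (rule sum.cong) auto
  also have "\<dots> = (if P then F x0 else 0)" using assms by (simp add: sum.delta')
  finally show ?thesis .
qed

lemma sig_psd:
  assumes rho: "psd (n*k) \<rho>" and y: "y < N" and k: "k > 0"
  shows "psd (n*N*k) (sig n N k y \<rho>)"
proof -
  define K where "K u x = (if ((x div k)*N + y)*k + x mod k = u then 1 else (0::complex))" for u x
  have R: "fpsd (n*k) (\<lambda>i j. \<rho> $$ (i,j))" using rho unfolding psd_iff by blast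
  have F: "fpsd (n*N*k) (\<lambda>u v. \<Sum>x<n*k. \<Sum>x'<n*k. K u x * \<rho> $$ (x,x') * cnj (K v x'))"
    by (rule kraus_fpsd[OF R])
  have "fpsd (n*N*k) (\<lambda>u v. sig n N k y \<rho> $$ (u,v))"
  proof (rule fpsd_cong[OF F])
    fix u v assume u: "u < n*N*k" and v: "v < n*N*k"
    define u0 where "u0 = ((u div k) div N)*k + u mod k"
    define v0 where "v0 = ((v div k) div N)*k + v mod k"
    have lt: "(u div k) div N < n" "(v div k) div N < n"
      using u v k y by (auto simp: less_mult_imp_div_less div_mult2_eq[symmetric] mult.commute mult.left_commute)
    have u0: "u0 < n*k" unfolding u0_def using lt k by (intro lt_mult_idx) auto
    have v0: "v0 < n*k" unfolding v0_def using lt k by (intro lt_mult_idx) auto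
    have Ku: "K u x = (if x = u0 \<and> (u div k) mod N = y then 1 else 0)" for x
      unfolding K_def u0_def emb_iff[OF y k] by auto
    have Kv: "cnj (K v x) = (if x = v0 \<and> (v div k) mod N = y then 1 else 0)" for x
      unfolding K_def v0_def emb_iff[OF y k] by auto
    have "(\<Sum>x<n*k. \<Sum>x'<n*k. K u x * \<rho> $$ (x,x') * cnj (K v x'))
        = (\<Sum>x<n*k. (if x = u0 \<and> (u div k) mod N = y then 1 else 0) * (\<Sum>x'<n*k. \<rho> $$ (x,x') * cnj (K v x')))"
      unfolding Ku by (simp add: sum_distrib_left mult.assoc)
    also have "\<dots> = (if (u div k) mod N = y then (\<Sum>x'<n*k. \<rho> $$ (u0,x') * cnj (K v x')) else 0)"
      by (rule sum_pick[OF u0])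
    also have "\<dots> = (if (u div k) mod N = y then (\<Sum>x'<n*k. (if x' = v0 \<and> (v div k) mod N = y then 1 else 0) * \<rho> $$ (u0,x')) else 0)"
      unfolding Kv by (simp add: mult.commute)
    also have "\<dots> = sig n N k y \<rho> $$ (u,v)"
      unfolding sum_pick[OF v0] sig_def using u v by (simp add: u0_def v0_def)
    finally show "(\<Sum>x<n*k. \<Sum>x'<n*k. K u x * \<rho> $$ (x,x') * cnj (K v x')) = sig n N k y \<rho> $$ (u,v)" .
  qed
  moreover have "sig n N k y \<rho> \<in> carrier_mat (n*N*k) (n*N*k)" unfolding sig_def by simp
  ultimately show ?thesis unfolding psd_iff by blast
qed



lemma kron_entry:
  assumes A: "A \<in> carrier_mat n n" and D: "D \<in> carrier_mat N N" and I: "I < n*N" and J: "J < n*N"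
  shows "kron A D $$ (I,J) = A $$ (I div N, J div N) * D $$ (I mod N, J mod N)"
  unfolding kron_def using A D I J by auto

lemma kron_carrier: "A \<in> carrier_mat n n \<Longrightarrow> D \<in> carrier_mat N N \<Longrightarrow> kron A D \<in> carrier_mat (n*N) (n*N)"
  unfolding kron_def by auto

lemma diag_entry: "i < N \<Longrightarrow> j < N \<Longrightarrow> diag_op N f $$ (i,j) = (if i = j then complex_of_real (f i) else 0)"
  unfolding diag_op_def by simp

lemma diag_carrier: "diag_op N f \<in> carrier_mat N N" unfolding diag_op_def by simp

lemma tensor_decomp:
  assumes ch: "channel (n*N) m \<Lambda>" and N: "N > 0"
    and sim: "\<forall>X\<in>carrier_mat n n. \<Psi> X = \<Lambda> (kron X (diag_op N f))"
    and u: "u < m*k" and v: "v < m*k"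
  shows "tensor_id n m k \<Psi> \<rho> $$ (u,v) = (\<Sum>y<N. complex_of_real (f y) * tensor_id (n*N) m k \<Lambda> (sig n N k y \<rho>) $$ (u,v))"
proof -
  have k: "k > 0" using u by (cases k) auto
  define a where "a = u div k"
  define b where "b = v div k"
  define ru where "ru = u mod k"
  define rv where "rv = v mod k"
  have ab: "a < m" "b < m" using u v k unfolding a_def b_def by (auto simp: less_mult_imp_div_less)
  have rr: "ru < k" "rv < k" using k unfolding ru_def rv_def by auto
  define A where "A = mat n n (\<lambda>(i,j). \<rho> $$ (i*k + ru, j*k + rv))"
  have Ac: "A \<in> carrier_mat n n" unfolding A_def by simp
  define C where "C I J = \<Lambda> (Emat (n*N) I J) $$ (a,b)" for I J
  define R where "R I J = \<rho> $$ ((I div N)*k + ru, (J div N)*k + rv)" for I J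
  have "tensor_id n m k \<Psi> \<rho> $$ (u,v) = \<Psi> A $$ (a,b)"
    unfolding tensor_id_def A_def a_def b_def ru_def rv_def using u v by simp
  also have "\<dots> = \<Lambda> (kron A (diag_op N f)) $$ (a,b)" using sim Ac by simp
  also have "\<dots> = (\<Sum>I<n*N. \<Sum>J<n*N. kron A (diag_op N f) $$ (I,J) * C I J)"
    unfolding C_def by (rule choi[OF ch kron_carrier[OF Ac diag_carrier] ab])
  also have "\<dots> = (\<Sum>I<n*N. \<Sum>J<n*N. (if I mod N = J mod N then complex_of_real (f (I mod N)) else 0) * R I J * C I J)"
  proof (rule sum.cong[OF refl], rule sum.cong[OF refl])
    fix I J assume I: "I \<in> {..<n*N}" and J: "J \<in> {..<n*N}"
    have lt: "I div N < n" "J div N < n" "I mod N < N" "J mod N < N" using I J N by (auto simp: less_mult_imp_div_less)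
    show "kron A (diag_op N f) $$ (I,J) * C I J = (if I mod N = J mod N then complex_of_real (f (I mod N)) else 0) * R I J * C I J"
    proof -
      have "kron A (diag_op N f) $$ (I,J) = A $$ (I div N, J div N) * diag_op N f $$ (I mod N, J mod N)"
        using I J by (intro kron_entry[OF Ac diag_carrier]) auto
      then show ?thesis using lt by (simp add: diag_entry A_def R_def)
    qed
  qed
  also have "\<dots> = (\<Sum>I<n*N. \<Sum>J<n*N. \<Sum>y<N. complex_of_real (f y) * ((if I mod N = y \<and> J mod N = y then R I J else 0) * C I J))"
  proof (rule sum.cong[OF refl], rule sum.cong[OF refl])
    fix I J
    have "I mod N < N" using N by auto
    have "(\<Sum>y<N. complex_of_real (f y) * ((if I mod N = y \<and> J mod N = y then R I J else 0) * C I J))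
      = (\<Sum>y<N. if y = I mod N then (if I mod N = J mod N then complex_of_real (f y) * R I J * C I J else 0) else 0)"
      by (rule sum.cong) auto
    also have "\<dots> = (if I mod N = J mod N then complex_of_real (f (I mod N)) else 0) * R I J * C I J"
      using \<open>I mod N < N\<close> by (simp add: sum.delta')
    finally show "(if I mod N = J mod N then complex_of_real (f (I mod N)) else 0) * R I J * C I J = (\<Sum>y<N. complex_of_real (f y) * ((if I mod N = y \<and> J mod N = y then R I J else 0) * C I J))" by simp
  qed
  also have "\<dots> = (\<Sum>y<N. \<Sum>I<n*N. \<Sum>J<n*N. complex_of_real (f y) * ((if I mod N = y \<and> J mod N = y then R I J else 0) * C I J))"
  proof -
    have "(\<Sum>I<n*N. \<Sum>J<n*N. \<Sum>y<N. complex_of_real (f y) * ((if I mod N = y \<and> J mod N = y then R I J else 0) * C I J))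
      = (\<Sum>I<n*N. \<Sum>y<N. \<Sum>J<n*N. complex_of_real (f y) * ((if I mod N = y \<and> J mod N = y then R I J else 0) * C I J))"
      by (rule sum.cong[OF refl]) (rule sum.swap)
    also have "\<dots> = (\<Sum>y<N. \<Sum>I<n*N. \<Sum>J<n*N. complex_of_real (f y) * ((if I mod N = y \<and> J mod N = y then R I J else 0) * C I J))"
      by (rule sum.swap)
    finally show ?thesis .
  qed
  also have "\<dots> = (\<Sum>y<N. complex_of_real (f y) * tensor_id (n*N) m k \<Lambda> (sig n N k y \<rho>) $$ (u,v))"
  proof (rule sum.cong[OF refl])
    fix y
    have "tensor_id (n*N) m k \<Lambda> (sig n N k y \<rho>) $$ (u,v) = (\<Sum>I<n*N. \<Sum>J<n*N. sig n N k y \<rho> $$ (I*k + ru, J*k + rv) * C I J)"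
      unfolding C_def a_def b_def ru_def rv_def by (rule tensor_choi[OF ch u v])
    also have "\<dots> = (\<Sum>I<n*N. \<Sum>J<n*N. (if I mod N = y \<and> J mod N = y then R I J else 0) * C I J)"
      by (rule sum.cong[OF refl], rule sum.cong[OF refl]) (simp add: sig_entry rr R_def)
    finally show "(\<Sum>I<n*N. \<Sum>J<n*N. complex_of_real (f y) * ((if I mod N = y \<and> J mod N = y then R I J else 0) * C I J)) =
         complex_of_real (f y) * tensor_id (n*N) m k \<Lambda> (sig n N k y \<rho>) $$ (u,v)"
      by (simp add: sum_distrib_left)
  qed
  finally show ?thesis .
qed

lemma mtrace_Emat: "I < n \<Longrightarrow> J < n \<Longrightarrow> mtrace (Emat n I J) = (if I = J then 1 else 0)"
proof -
  assume I: "I < n" and J: "J < n"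
  have "mtrace (Emat n I J) = (\<Sum>i<n. if i = I then (if I = J then 1 else 0) else 0)"
    unfolding mtrace_def Emat_def by (rule sum.cong) auto
  then show ?thesis using I by (simp add: sum.delta')
qed

lemma tensor_trace:
  assumes ch: "channel n m \<Lambda>" and k: "k > 0" and s: "\<sigma> \<in> carrier_mat (n*k) (n*k)"
  shows "mtrace (tensor_id n m k \<Lambda> \<sigma>) = mtrace \<sigma>"
proof -
  define C where "C I J a = \<Lambda> (Emat n I J) $$ (a,a)" for I J a
  have "mtrace (tensor_id n m k \<Lambda> \<sigma>) = (\<Sum>u<m*k. tensor_id n m k \<Lambda> \<sigma> $$ (u,u))"
    unfolding mtrace_def tensor_id_def by simp
  also have "\<dots> = (\<Sum>a<m. \<Sum>r<k. \<Sum>I<n. \<Sum>J<n. \<sigma> $$ (I*k + r, J*k + r) * C I J a)"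
    unfolding sum_split
  proof (rule sum.cong[OF refl], rule sum.cong[OF refl])
    fix a r assume a: "a \<in> {..<m}" and r: "r \<in> {..<k}"
    then have "a*k+r < m*k" by (auto intro: lt_mult_idx)
    then show "tensor_id n m k \<Lambda> \<sigma> $$ (a*k+r, a*k+r) = (\<Sum>I<n. \<Sum>J<n. \<sigma> $$ (I*k + r, J*k + r) * C I J a)"
      using r by (simp add: tensor_choi[OF ch] C_def)
  qed
  also have "\<dots> = (\<Sum>r<k. \<Sum>I<n. \<Sum>J<n. \<Sum>a<m. \<sigma> $$ (I*k + r, J*k + r) * C I J a)"
  proof -
    have "(\<Sum>a<m. \<Sum>r<k. \<Sum>I<n. \<Sum>J<n. \<sigma> $$ (I*k + r, J*k + r) * C I J a) = (\<Sum>r<k. \<Sum>a<m. \<Sum>I<n. \<Sum>J<n. \<sigma> $$ (I*k + r, J*k + r) * C I J a)"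
      by (rule sum.swap)
    also have "\<dots> = (\<Sum>r<k. \<Sum>I<n. \<Sum>a<m. \<Sum>J<n. \<sigma> $$ (I*k + r, J*k + r) * C I J a)"
      by (rule sum.cong[OF refl]) (rule sum.swap)
    also have "\<dots> = (\<Sum>r<k. \<Sum>I<n. \<Sum>J<n. \<Sum>a<m. \<sigma> $$ (I*k + r, J*k + r) * C I J a)"
      by (rule sum.cong[OF refl], rule sum.cong[OF refl]) (rule sum.swap)
    finally show ?thesis .
  qed
  also have "\<dots> = (\<Sum>r<k. \<Sum>I<n. \<Sum>J<n. \<sigma> $$ (I*k + r, J*k + r) * (if I = J then 1 else 0))"
  proof (rule sum.cong[OF refl], rule sum.cong[OF refl], rule sum.cong[OF refl])
    fix r I J assume I: "I \<in> {..<n}" and J: "J \<in> {..<n}"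
    have E: "Emat n I J \<in> carrier_mat n n" unfolding Emat_def by simp
    have "(\<Sum>a<m. C I J a) = mtrace (\<Lambda> (Emat n I J))"
      unfolding C_def mtrace_def using channel_carrier[OF ch E] by simp
    also have "\<dots> = (if I = J then 1 else 0)" using channel_tp[OF ch E] mtrace_Emat I J by simp
    finally show "(\<Sum>a<m. \<sigma> $$ (I*k + r, J*k + r) * C I J a) = \<sigma> $$ (I*k + r, J*k + r) * (if I = J then 1 else 0)"
      by (simp add: sum_distrib_left[symmetric])
  qed
  also have "\<dots> = (\<Sum>r<k. \<Sum>I<n. \<sigma> $$ (I*k + r, I*k + r))"
    by (rule sum.cong[OF refl], rule sum.cong[OF refl]) (simp add: sum.delta' if_distrib cong: if_cong)
  also have "\<dots> = (\<Sum>I<n. \<Sum>r<k. \<sigma> $$ (I*k + r, I*k + r))" by (rule sum.swap)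
  also have "\<dots> = mtrace \<sigma>" unfolding mtrace_def using s sum_split[of "\<lambda>x. \<sigma> $$ (x,x)" n k] by simp
  finally show ?thesis .
qed



lemma sig_trace:
  assumes rho: "\<rho> \<in> carrier_mat (n*k) (n*k)" and y: "y < N" and k: "k > 0"
  shows "mtrace (sig n N k y \<rho>) = mtrace \<rho>"
proof -
  have "mtrace (sig n N k y \<rho>) = (\<Sum>I<n*N. \<Sum>r<k. sig n N k y \<rho> $$ (I*k+r, I*k+r))"
    unfolding mtrace_def sig_def using sum_split[of "\<lambda>u. sig n N k y \<rho> $$ (u,u)" "n*N" k]
    by (simp add: sig_def)
  also have "\<dots> = (\<Sum>I<n*N. \<Sum>r<k. if I mod N = y then \<rho> $$ ((I div N)*k + r, (I div N)*k + r) else 0)"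
    by (rule sum.cong[OF refl], rule sum.cong[OF refl]) (simp add: sig_entry)
  also have "\<dots> = (\<Sum>i<n. \<Sum>c<N. \<Sum>r<k. if c = y then \<rho> $$ (i*k + r, i*k + r) else 0)"
    unfolding sum_split
  proof (rule sum.cong[OF refl], rule sum.cong[OF refl])
    fix i c assume "c \<in> {..<N}"
    then have e: "(i*N + c) div N = i" "(i*N + c) mod N = c" by simp_all
    show "(\<Sum>r<k. if (i*N + c) mod N = y then \<rho> $$ ((i*N + c) div N * k + r, (i*N + c) div N * k + r) else 0) = (\<Sum>r<k. if c = y then \<rho> $$ (i*k + r, i*k + r) else 0)"
      unfolding e ..
  qed
  also have "\<dots> = (\<Sum>i<n. \<Sum>r<k. \<rho> $$ (i*k + r, i*k + r))"
  proof (rule sum.cong[OF refl])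
    fix i
    have "(\<Sum>c<N. \<Sum>r<k. if c = y then \<rho> $$ (i*k + r, i*k + r) else 0) = (\<Sum>c<N. if c = y then (\<Sum>r<k. \<rho> $$ (i*k + r, i*k + r)) else 0)"
      by (rule sum.cong[OF refl]) simp
    then show "(\<Sum>c<N. \<Sum>r<k. if c = y then \<rho> $$ (i*k + r, i*k + r) else 0) = (\<Sum>r<k. \<rho> $$ (i*k + r, i*k + r))"
      using y by (simp add: sum.delta')
  qed
  also have "\<dots> = mtrace \<rho>" unfolding mtrace_def using rho sum_split[of "\<lambda>x. \<rho> $$ (x,x)" n k] by simp
  finally show ?thesis .
qed

lemma DP:
  assumes ch: "channel (n*N) m \<Lambda>"
    and q: "\<forall>y<N. q y \<ge> 0" and q1: "(\<Sum>y<N. q y) = 1"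
    and sim: "\<forall>X\<in>carrier_mat n n. \<Phi> X = \<Lambda> (kron X (diag_op N q)) \<and> \<Delta> X = \<Lambda> (kron X (diag_op N \<delta>))"
    and k: "k > 0" and rho: "density (n*k) \<rho>" and M: "povm (m*k) N' M"
  shows "Jfi {0..<N'} (\<lambda>y. Re (mtrace (tensor_id n m k \<Phi> \<rho> * M y))) (\<lambda>y. Re (mtrace (tensor_id n m k \<Delta> \<rho> * M y)))
         \<le> Jfi {0..<N} q \<delta>"
proof -
  have N: "N > 0" using q1 by (cases N) auto
  define T where "T y = tensor_id (n*N) m k \<Lambda> (sig n N k y \<rho>)" for y
  define r where "r y y' = Re (mtrace (T y * M y'))" for y y'
  have rhop: "psd (n*k) \<rho>" and rho1: "mtrace \<rho> = 1" using rho unfolding density_def by auto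
  have rhoc: "\<rho> \<in> carrier_mat (n*k) (n*k)" using rhop unfolding psd_def by auto
  have Tc: "T y \<in> carrier_mat (m*k) (m*k)" for y unfolding T_def tensor_id_def by simp
  have Tp: "psd (m*k) (T y)" if "y < N" for y
    unfolding T_def by (rule channel_cp[OF ch k sig_psd[OF rhop that k]])
  have T1: "mtrace (T y) = 1" if "y < N" for y
  proof -
    have "sig n N k y \<rho> \<in> carrier_mat (n*N*k) (n*N*k)" unfolding sig_def by simp
    then show ?thesis unfolding T_def using tensor_trace[OF ch k] sig_trace[OF rhoc that k] rho1 by simp
  qed
  have Mp: "psd (m*k) (M y')" if "y' < N'" for y' using M that unfolding povm_def by auto
  have Mc: "M y' \<in> carrier_mat (m*k) (m*k)" if "y' < N'" for y' using Mp[OF that] unfolding psd_def by auto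
  have Msum: "(\<Sum>y'<N'. M y' $$ (i,j)) = (if i = j then 1 else 0)" if "i < m*k" "j < m*k" for i j
    using M that unfolding povm_def by simp
  have r0: "r y y' \<ge> 0" if "y < N" "y' < N'" for y y'
    unfolding r_def by (rule psd_trace[OF Tp[OF that(1)] Mp[OF that(2)]])
  have r1: "(\<Sum>y'<N'. r y y') = 1" if y: "y < N" for y
  proof -
    have "(\<Sum>y'<N'. mtrace (T y * M y')) = (\<Sum>y'<N'. \<Sum>i<m*k. \<Sum>j<m*k. T y $$ (i,j) * M y' $$ (j,i))"
      by (rule sum.cong[OF refl]) (simp add: mtrace_mult[OF Tc Mc] TR_def)
    also have "\<dots> = (\<Sum>i<m*k. \<Sum>j<m*k. T y $$ (i,j) * (\<Sum>y'<N'. M y' $$ (j,i)))"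
    proof -
      have "(\<Sum>y'<N'. \<Sum>i<m*k. \<Sum>j<m*k. T y $$ (i,j) * M y' $$ (j,i)) = (\<Sum>i<m*k. \<Sum>y'<N'. \<Sum>j<m*k. T y $$ (i,j) * M y' $$ (j,i))"
        by (rule sum.swap)
      also have "\<dots> = (\<Sum>i<m*k. \<Sum>j<m*k. \<Sum>y'<N'. T y $$ (i,j) * M y' $$ (j,i))"
        by (rule sum.cong[OF refl]) (rule sum.swap)
      finally show ?thesis by (simp add: sum_distrib_left)
    qed
    also have "\<dots> = (\<Sum>i<m*k. \<Sum>j<m*k. T y $$ (i,j) * (if j = i then 1 else 0))"
      by (rule sum.cong[OF refl], rule sum.cong[OF refl]) (simp add: Msum)
    also have "\<dots> = mtrace (T y)" unfolding mtrace_def using Tc[of y]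
      by (simp add: sum_ev2)
    finally have "(\<Sum>y'<N'. mtrace (T y * M y')) = 1" using T1[OF y] by simp
    then show ?thesis unfolding r_def by (simp add: Re_sum[symmetric])
  qed
  have pd: "Re (mtrace (tensor_id n m k \<Psi> \<rho> * M y')) = (\<Sum>y<N. f y * r y y')"
    if y': "y' < N'" and simf: "\<forall>X\<in>carrier_mat n n. \<Psi> X = \<Lambda> (kron X (diag_op N f))" for y' \<Psi> f
  proof -
    have Pc: "tensor_id n m k \<Psi> \<rho> \<in> carrier_mat (m*k) (m*k)" unfolding tensor_id_def by simp
    have "mtrace (tensor_id n m k \<Psi> \<rho> * M y') = (\<Sum>i<m*k. \<Sum>j<m*k. (\<Sum>y<N. complex_of_real (f y) * T y $$ (i,j)) * M y' $$ (j,i))"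
      unfolding mtrace_mult[OF Pc Mc[OF y']] TR_def T_def
      by (rule sum.cong[OF refl], rule sum.cong[OF refl]) (simp add: tensor_decomp[OF ch N simf])
    also have "\<dots> = (\<Sum>y<N. complex_of_real (f y) * mtrace (T y * M y'))"
    proof -
      have "(\<Sum>i<m*k. \<Sum>j<m*k. (\<Sum>y<N. complex_of_real (f y) * T y $$ (i,j)) * M y' $$ (j,i))
          = (\<Sum>i<m*k. \<Sum>j<m*k. \<Sum>y<N. complex_of_real (f y) * (T y $$ (i,j) * M y' $$ (j,i)))"
        by (simp add: sum_distrib_right mult.assoc)
      also have "\<dots> = (\<Sum>i<m*k. \<Sum>y<N. \<Sum>j<m*k. complex_of_real (f y) * (T y $$ (i,j) * M y' $$ (j,i)))"
        by (rule sum.cong[OF refl]) (rule sum.swap)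
      also have "\<dots> = (\<Sum>y<N. \<Sum>i<m*k. \<Sum>j<m*k. complex_of_real (f y) * (T y $$ (i,j) * M y' $$ (j,i)))"
        by (rule sum.swap)
      also have "\<dots> = (\<Sum>y<N. complex_of_real (f y) * mtrace (T y * M y'))"
        by (rule sum.cong[OF refl]) (simp add: mtrace_mult[OF Tc Mc[OF y']] TR_def sum_distrib_left)
      finally show ?thesis .
    qed
    finally show ?thesis unfolding r_def by (simp add: Re_sum)
  qed
  have simq: "\<forall>X\<in>carrier_mat n n. \<Phi> X = \<Lambda> (kron X (diag_op N q))" using sim by blast
  have simd: "\<forall>X\<in>carrier_mat n n. \<Delta> X = \<Lambda> (kron X (diag_op N \<delta>))" using sim by blast
  show ?thesis
    by (rule classical_DP[of N q N' r]) (use q r0 r1 pd[OF _ simq] pd[OF _ simd] in auto)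
qed



definition kraus :: "nat \<Rightarrow> nat \<Rightarrow> nat \<Rightarrow> (nat \<Rightarrow> nat \<Rightarrow> nat \<Rightarrow> complex) \<Rightarrow> complex mat \<Rightarrow> complex mat" where
  "kraus L n m K X = mat m m (\<lambda>(a,b). \<Sum>l<L. \<Sum>I<n. \<Sum>J<n. K l a I * X $$ (I,J) * cnj (K l b J))"

lemma kraus_channel:
  assumes TP: "\<And>I J. I < n \<Longrightarrow> J < n \<Longrightarrow> (\<Sum>l<L. \<Sum>a<m. K l a I * cnj (K l a J)) = (if I = J then 1 else 0)"
  shows "channel n m (kraus L n m K)"
  unfolding channel_def
proof (intro conjI ballI allI impI)
  fix X :: "complex mat" assume "X \<in> carrier_mat n n"
  then show "kraus L n m K X \<in> carrier_mat m m" unfolding kraus_def by simp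
next
  fix c and X Y :: "complex mat" assume X: "X \<in> carrier_mat n n" and Y: "Y \<in> carrier_mat n n"
  show "kraus L n m K (c \<cdot>\<^sub>m X + Y) = c \<cdot>\<^sub>m kraus L n m K X + kraus L n m K Y"
  proof (rule eq_matI)
    fix a b assume a: "a < dim_row (c \<cdot>\<^sub>m kraus L n m K X + kraus L n m K Y)" and b: "b < dim_col (c \<cdot>\<^sub>m kraus L n m K X + kraus L n m K Y)"
    then have a: "a < m" and b: "b < m" unfolding kraus_def by auto
    have "(\<Sum>l<L. \<Sum>I<n. \<Sum>J<n. K l a I * (c \<cdot>\<^sub>m X + Y) $$ (I,J) * cnj (K l b J))
        = (\<Sum>l<L. \<Sum>I<n. \<Sum>J<n. c * (K l a I * X $$ (I,J) * cnj (K l b J)) + K l a I * Y $$ (I,J) * cnj (K l b J))"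
      by (rule sum.cong[OF refl], rule sum.cong[OF refl], rule sum.cong[OF refl]) (use X Y in \<open>auto simp: algebra_simps\<close>)
    also have "\<dots> = c * (\<Sum>l<L. \<Sum>I<n. \<Sum>J<n. K l a I * X $$ (I,J) * cnj (K l b J)) + (\<Sum>l<L. \<Sum>I<n. \<Sum>J<n. K l a I * Y $$ (I,J) * cnj (K l b J))"
      by (simp add: sum.distrib sum_distrib_left)
    finally show "kraus L n m K (c \<cdot>\<^sub>m X + Y) $$ (a,b) = (c \<cdot>\<^sub>m kraus L n m K X + kraus L n m K Y) $$ (a,b)"
      unfolding kraus_def using a b by simp
  qed (auto simp: kraus_def)
next
  fix X :: "complex mat" assume X: "X \<in> carrier_mat n n"
  have "mtrace (kraus L n m K X) = (\<Sum>a<m. \<Sum>l<L. \<Sum>I<n. \<Sum>J<n. K l a I * X $$ (I,J) * cnj (K l a J))"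
    unfolding mtrace_def kraus_def by simp
  also have "\<dots> = (\<Sum>I<n. \<Sum>J<n. \<Sum>a<m. \<Sum>l<L. K l a I * X $$ (I,J) * cnj (K l a J))"
    by (rule sum4_swap)
  also have "\<dots> = (\<Sum>I<n. \<Sum>J<n. X $$ (I,J) * (\<Sum>l<L. \<Sum>a<m. K l a I * cnj (K l a J)))"
  proof (rule sum.cong[OF refl], rule sum.cong[OF refl])
    fix I J
    have "(\<Sum>a<m. \<Sum>l<L. K l a I * X $$ (I,J) * cnj (K l a J)) = (\<Sum>l<L. \<Sum>a<m. K l a I * X $$ (I,J) * cnj (K l a J))"
      by (rule sum.swap)
    then show "(\<Sum>a<m. \<Sum>l<L. K l a I * X $$ (I,J) * cnj (K l a J)) = X $$ (I,J) * (\<Sum>l<L. \<Sum>a<m. K l a I * cnj (K l a J))"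
      by (simp add: sum_distrib_left mult_ac)
  qed
  also have "\<dots> = (\<Sum>I<n. \<Sum>J<n. X $$ (I,J) * (if I = J then 1 else 0))"
    by (rule sum.cong[OF refl], rule sum.cong[OF refl]) (simp add: TP)
  also have "\<dots> = mtrace X" unfolding mtrace_def using X
  proof -
    have "(\<Sum>J<n. X $$ (I,J) * (if I = J then 1 else 0)) = X $$ (I,I)" if "I < n" for I
    proof -
      have "(\<Sum>J<n. X $$ (I,J) * (if I = J then 1 else 0)) = (\<Sum>J<n. if I = J then X $$ (I,J) else 0)"
        by (rule sum.cong) auto
      then show ?thesis using that by (simp add: sum.delta)
    qed
    then show "(\<Sum>I<n. \<Sum>J<n. X $$ (I,J) * (if I = J then 1 else 0)) = (\<Sum>i<dim_row X. X $$ (i,i))" using X by simp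
  qed
  finally show "mtrace (kraus L n m K X) = mtrace X" .
next
  fix k :: nat and \<rho> assume k: "k > 0" and rho: "psd (n*k) \<rho>"
  define K' where "K' l u x = (if x mod k = u mod k then K l (u div k) (x div k) else 0)" for l u x
  have R: "fpsd (n*k) (\<lambda>i j. \<rho> $$ (i,j))" using rho unfolding psd_iff by blast
  have F: "fpsd (m*k) (\<lambda>u v. \<Sum>l<L. \<Sum>x<n*k. \<Sum>x'<n*k. K' l u x * \<rho> $$ (x,x') * cnj (K' l v x'))"
    by (rule fpsd_sum) (rule kraus_fpsd[OF R])
  have pick: "(\<Sum>x<n*k. (if x mod k = u mod k then G (x div k) else 0) * H x) = (\<Sum>I<n. G I * H (I*k + u mod k))"
    for u and G :: "nat \<Rightarrow> complex" and H
  proof -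
    have um: "u mod k < k" using k by simp
    have "(\<Sum>x<n*k. (if x mod k = u mod k then G (x div k) else 0) * H x)
       = (\<Sum>I<n. \<Sum>r<k. (if r = u mod k then G I * H (I*k + r) else 0))"
      unfolding sum_split by (rule sum.cong[OF refl], rule sum.cong[OF refl]) (auto simp: dm_simps)
    also have "\<dots> = (\<Sum>I<n. G I * H (I*k + u mod k))" using um by (simp add: sum.delta')
    finally show ?thesis .
  qed
  have "fpsd (m*k) (\<lambda>u v. tensor_id n m k (kraus L n m K) \<rho> $$ (u,v))"
  proof (rule fpsd_cong[OF F])
    fix u v assume u: "u < m*k" and v: "v < m*k"
    have a: "u div k < m" "v div k < m" using u v k by (auto simp: less_mult_imp_div_less)
    have "(\<Sum>l<L. \<Sum>x<n*k. \<Sum>x'<n*k. K' l u x * \<rho> $$ (x,x') * cnj (K' l v x'))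
        = (\<Sum>l<L. \<Sum>I<n. \<Sum>J<n. K l (u div k) I * \<rho> $$ (I*k + u mod k, J*k + v mod k) * cnj (K l (v div k) J))"
    proof (rule sum.cong[OF refl])
      fix l
      have "(\<Sum>x<n*k. \<Sum>x'<n*k. K' l u x * \<rho> $$ (x,x') * cnj (K' l v x'))
          = (\<Sum>x<n*k. (if x mod k = u mod k then K l (u div k) (x div k) else 0) * (\<Sum>x'<n*k. (if x' mod k = v mod k then cnj (K l (v div k) (x' div k)) else 0) * \<rho> $$ (x,x')))"
      proof -
        have ck: "cnj (K' l v x') = (if x' mod k = v mod k then cnj (K l (v div k) (x' div k)) else 0)" for x'
          unfolding K'_def by simp
        have "(\<Sum>x<n*k. \<Sum>x'<n*k. K' l u x * \<rho> $$ (x,x') * cnj (K' l v x'))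
          = (\<Sum>x<n*k. K' l u x * (\<Sum>x'<n*k. cnj (K' l v x') * \<rho> $$ (x,x')))"
          by (rule sum.cong[OF refl]) (simp add: sum_distrib_left mult_ac)
        then show ?thesis unfolding ck by (simp add: K'_def)
      qed
      also have "\<dots> = (\<Sum>I<n. K l (u div k) I * (\<Sum>J<n. cnj (K l (v div k) J) * \<rho> $$ (I*k + u mod k, J*k + v mod k)))"
      proof -
        have inner: "(\<Sum>x'<n*k. (if x' mod k = v mod k then cnj (K l (v div k) (x' div k)) else 0) * \<rho> $$ (x,x'))
           = (\<Sum>J<n. cnj (K l (v div k) J) * \<rho> $$ (x, J*k + v mod k))" for x
          by (rule pick[of v "\<lambda>J. cnj (K l (v div k) J)" "\<lambda>x'. \<rho> $$ (x,x')"])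
        show ?thesis unfolding inner
          by (rule pick[of u "\<lambda>I. K l (u div k) I" "\<lambda>x. \<Sum>J<n. cnj (K l (v div k) J) * \<rho> $$ (x, J*k + v mod k)"])
      qed
      also have "\<dots> = (\<Sum>I<n. \<Sum>J<n. K l (u div k) I * \<rho> $$ (I*k + u mod k, J*k + v mod k) * cnj (K l (v div k) J))"
        by (simp add: sum_distrib_left mult_ac)
      finally show "(\<Sum>x<n*k. \<Sum>x'<n*k. K' l u x * \<rho> $$ (x,x') * cnj (K' l v x')) = (\<Sum>I<n. \<Sum>J<n. K l (u div k) I * \<rho> $$ (I*k + u mod k, J*k + v mod k) * cnj (K l (v div k) J))" .
    qed
    also have "\<dots> = tensor_id n m k (kraus L n m K) \<rho> $$ (u,v)"
      unfolding tensor_id_def kraus_def using u v a by simp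
    finally show "(\<Sum>l<L. \<Sum>x<n*k. \<Sum>x'<n*k. K' l u x * \<rho> $$ (x,x') * cnj (K' l v x')) = tensor_id n m k (kraus L n m K) \<rho> $$ (u,v)" .
  qed
  moreover have "tensor_id n m k (kraus L n m K) \<rho> \<in> carrier_mat (m*k) (m*k)" unfolding tensor_id_def by simp
  ultimately show "psd (m*k) (tensor_id n m k (kraus L n m K) \<rho>)" unfolding psd_iff by blast
qed



definition Pent :: "nat \<Rightarrow> nat \<Rightarrow> nat \<Rightarrow> complex" where
  "Pent l a b = (if l = 0 then (if a = b then 1 else 0)
    else if l = 1 then (if a \<noteq> b then 1 else 0)
    else if l = 2 then (if a = 0 \<and> b = 1 then - \<i> else if a = 1 \<and> b = 0 then \<i> else 0)
    else (if a = b then (if a = 0 then 1 else -1) else 0))"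

lemma sum_lt2: "(\<Sum>a<2. f a) = f 0 + f (1::nat)" by (simp add: eval_nat_numeral)
lemma sum_lt4: "(\<Sum>a<4. f a) = f 0 + f 1 + f 2 + f (3::nat)" by (simp add: eval_nat_numeral)
lemma sum_lt8: "(\<Sum>a<8. f a) = f 0 + f 1 + f 2 + f 3 + f 4 + f 5 + f 6 + f (7::nat)" by (simp add: eval_nat_numeral)

lemma lt2: "(a::nat) < 2 \<longleftrightarrow> a = 0 \<or> a = 1" by auto
lemma lt4: "(a::nat) < 4 \<longleftrightarrow> a = 0 \<or> a = 1 \<or> a = 2 \<or> a = 3" by auto
lemma lt8: "(a::nat) < 8 \<longleftrightarrow> a = 0 \<or> a = 1 \<or> a = 2 \<or> a = 3 \<or> a = 4 \<or> a = 5 \<or> a = 6 \<or> a = 7" by auto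

definition Kp :: "nat \<Rightarrow> nat \<Rightarrow> nat \<Rightarrow> complex" where
  "Kp l a I = (if I mod 4 = l then Pent l a (I div 4) else 0)"

lemma Pent_unit: "l < 4 \<Longrightarrow> i < 2 \<Longrightarrow> j < 2 \<Longrightarrow> (\<Sum>a<2. Pent l a i * cnj (Pent l a j)) = (if i = j then 1 else 0)"
  unfolding lt4 lt2 by (elim disjE) (simp_all add: sum_lt2 Pent_def)

lemma Kp_TP: assumes I: "I < 2*4" and J: "J < 2*4"
  shows "(\<Sum>l<4. \<Sum>a<2. Kp l a I * cnj (Kp l a J)) = (if I = J then 1 else 0)"
proof -
  have "(\<Sum>l<4. \<Sum>a<2. Kp l a I * cnj (Kp l a J))
      = (\<Sum>l<4. if l = I mod 4 then (if I mod 4 = J mod 4 then (\<Sum>a<2. Pent l a (I div 4) * cnj (Pent l a (J div 4))) else 0) else 0)"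
    unfolding Kp_def by (rule sum.cong[OF refl]) auto
  also have "\<dots> = (if I mod 4 = J mod 4 then (\<Sum>a<2. Pent (I mod 4) a (I div 4) * cnj (Pent (I mod 4) a (J div 4))) else 0)"
    by (simp add: sum.delta')
  also have "\<dots> = (if I mod 4 = J mod 4 then (if I div 4 = J div 4 then 1 else 0) else 0)"
    using I J by (simp add: Pent_unit less_mult_imp_div_less)
  also have "\<dots> = (if I = J then 1 else 0)"
    by (metis div_mult_mod_eq)
  finally show ?thesis .
qed

lemma channel_L0: "channel (2*4) 2 (kraus 4 (2*4) 2 Kp)"
  by (rule kraus_channel) (rule Kp_TP)


lemma Pent_herm: "l < 4 \<Longrightarrow> i < 2 \<Longrightarrow> j < 2 \<Longrightarrow> cnj (Pent l i j) = Pent l j i"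
  unfolding lt4 lt2 by (elim disjE) (simp_all add: Pent_def)

lemma kraus_Kp_entry:
  assumes a: "a < 2" and b: "b < 2"
  shows "kraus 4 (2*4) 2 Kp Y $$ (a,b) = (\<Sum>l<4. \<Sum>i<2. \<Sum>j<2. Pent l a i * Y $$ (i*4+l, j*4+l) * cnj (Pent l b j))"
proof -
  have "kraus 4 (2*4) 2 Kp Y $$ (a,b) = (\<Sum>l<4. \<Sum>I<2*4. \<Sum>J<2*4. Kp l a I * Y $$ (I,J) * cnj (Kp l b J))"
    unfolding kraus_def using a b by simp
  also have "\<dots> = (\<Sum>l<4. \<Sum>i<2. \<Sum>j<2. Pent l a i * Y $$ (i*4+l, j*4+l) * cnj (Pent l b j))"
  proof (rule sum.cong[OF refl])
    fix l :: nat assume l: "l \<in> {..<4}"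
    have K: "Kp l x (i*4+c) = (if c = l then Pent l x i else 0)" if "c < 4" for x i c
      unfolding Kp_def using that by simp
    have "(\<Sum>I<2*4. \<Sum>J<2*4. Kp l a I * Y $$ (I,J) * cnj (Kp l b J))
        = (\<Sum>i<2. \<Sum>c<4. \<Sum>j<2. \<Sum>d<4. Kp l a (i*4+c) * Y $$ (i*4+c,j*4+d) * cnj (Kp l b (j*4+d)))"
      unfolding sum_split ..
    also have "\<dots> = (\<Sum>i<2. \<Sum>j<2. Pent l a i * Y $$ (i*4+l, j*4+l) * cnj (Pent l b j))"
    proof (rule sum.cong[OF refl])
      fix i :: nat
      have inner: "(\<Sum>d<4. Kp l a (i*4+c) * Y $$ (i*4+c, j*4+d) * cnj (Kp l b (j*4+d)))
          = Kp l a (i*4+c) * Y $$ (i*4+c, j*4+l) * cnj (Pent l b j)" for c j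
      proof -
        have "(\<Sum>d<4. Kp l a (i*4+c) * Y $$ (i*4+c, j*4+d) * cnj (Kp l b (j*4+d)))
            = (\<Sum>d<4. if d = l then Kp l a (i*4+c) * Y $$ (i*4+c, j*4+l) * cnj (Pent l b j) else 0)"
          by (rule sum.cong[OF refl]) (simp add: K)
        then show ?thesis using l by (simp add: sum.delta')
      qed
      have "(\<Sum>c<4. \<Sum>j<2. \<Sum>d<4. Kp l a (i*4+c) * Y $$ (i*4+c,j*4+d) * cnj (Kp l b (j*4+d)))
          = (\<Sum>c<4. if c = l then (\<Sum>j<2. Pent l a i * Y $$ (i*4+l, j*4+l) * cnj (Pent l b j)) else 0)"
        unfolding inner by (rule sum.cong[OF refl]) (simp add: K)
      then show "(\<Sum>c<4. \<Sum>j<2. \<Sum>d<4. Kp l a (i*4+c) * Y $$ (i*4+c,j*4+d) * cnj (Kp l b (j*4+d)))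
          = (\<Sum>j<2. Pent l a i * Y $$ (i*4+l, j*4+l) * cnj (Pent l b j))" using l by (simp add: sum.delta')
    qed
    finally show "(\<Sum>I<2*4. \<Sum>J<2*4. Kp l a I * Y $$ (I,J) * cnj (Kp l b J)) = (\<Sum>i<2. \<Sum>j<2. Pent l a i * Y $$ (i*4+l, j*4+l) * cnj (Pent l b j))" .
  qed
  finally show ?thesis .
qed

lemma pauli_ent: "i < 2 \<Longrightarrow> j < 2 \<Longrightarrow> pauliX $$ (i,j) = Pent 1 i j \<and> pauliY $$ (i,j) = Pent 2 i j \<and> pauliZ $$ (i,j) = Pent 3 i j"
  unfolding lt2 by (elim disjE) (simp_all add: pauliX_def pauliY_def pauliZ_def mat_of_rows_list_def Pent_def)

lemma pauli_carrier: "pauliX \<in> carrier_mat 2 2" "pauliY \<in> carrier_mat 2 2" "pauliZ \<in> carrier_mat 2 2"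
  by (simp_all add: pauliX_def pauliY_def pauliZ_def mat_of_rows_list_def numeral_2_eq_2)

lemma PXP_entry:
  assumes P: "P \<in> carrier_mat 2 2" and X: "X \<in> carrier_mat 2 2" and a: "a < 2" and b: "b < 2"
  shows "(P * X * P) $$ (a,b) = (\<Sum>i<2. \<Sum>j<2. P $$ (a,i) * X $$ (i,j) * P $$ (j,b))"
  using P X a b by (simp add: scalar_prod_def sum_lt2 atLeast0LessThan algebra_simps)

lemma pauli_sim:
  assumes X: "X \<in> carrier_mat 2 2"
  shows "pauli_map w x y z X = kraus 4 (2*4) 2 Kp (kron X (diag_op 4 (\<lambda>l. [w,x,y,z] ! l)))"
proof (rule eq_matI)
  fix a b assume a: "a < dim_row (kraus 4 (2*4) 2 Kp (kron X (diag_op 4 (\<lambda>l. [w,x,y,z] ! l))))"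
    and b: "b < dim_col (kraus 4 (2*4) 2 Kp (kron X (diag_op 4 (\<lambda>l. [w,x,y,z] ! l))))"
  then have a: "a < 2" and b: "b < 2" unfolding kraus_def by auto
  have D: "diag_op 4 (\<lambda>l. [w,x,y,z] ! l) \<in> carrier_mat 4 4" by (rule diag_carrier)
  define S where "S l = (\<Sum>i<2. \<Sum>j<2. Pent l a i * X $$ (i,j) * Pent l j b)" for l
  have Y: "kron X (diag_op 4 (\<lambda>l. [w,x,y,z] ! l)) $$ (i*4+l, j*4+l) = X $$ (i,j) * complex_of_real ([w,x,y,z] ! l)"
    if "i < 2" "j < 2" "l < 4" for i j l
  proof -
    have "i*4+l < 2*4" "j*4+l < 2*4" using that lt_mult_idx by auto
    then show ?thesis using kron_entry[OF X D] that by (simp add: diag_entry)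
  qed
  have "kraus 4 (2*4) 2 Kp (kron X (diag_op 4 (\<lambda>l. [w,x,y,z] ! l))) $$ (a,b)
      = (\<Sum>l<4. \<Sum>i<2. \<Sum>j<2. Pent l a i * (X $$ (i,j) * complex_of_real ([w,x,y,z] ! l)) * Pent l j b)"
    unfolding kraus_Kp_entry[OF a b]
    by (rule sum.cong[OF refl], rule sum.cong[OF refl], rule sum.cong[OF refl]) (simp add: Y Pent_herm b)
  also have "\<dots> = (\<Sum>l<4. complex_of_real ([w,x,y,z] ! l) * S l)"
    unfolding S_def by (simp add: sum_distrib_left mult_ac)
  also have "\<dots> = pauli_map w x y z X $$ (a,b)"
  proof -
    have e: "pauli_map w x y z X $$ (a,b) = complex_of_real w * X $$ (a,b) + complex_of_real x * (pauliX*X*pauliX) $$ (a,b)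
       + complex_of_real y * (pauliY*X*pauliY) $$ (a,b) + complex_of_real z * (pauliZ*X*pauliZ) $$ (a,b)"
    proof -
      define A1 where "A1 = pauliX*X*pauliX"
      define A2 where "A2 = pauliY*X*pauliY"
      define A3 where "A3 = pauliZ*X*pauliZ"
      have c: "A1 \<in> carrier_mat 2 2" "A2 \<in> carrier_mat 2 2" "A3 \<in> carrier_mat 2 2"
        unfolding A1_def A2_def A3_def using pauli_carrier X by (meson mult_carrier_mat)+
      have "pauli_map w x y z X $$ (a,b) = complex_of_real w * X $$ (a,b) + complex_of_real x * A1 $$ (a,b)
       + complex_of_real y * A2 $$ (a,b) + complex_of_real z * A3 $$ (a,b)"
        unfolding pauli_map_def A1_def[symmetric] A2_def[symmetric] A3_def[symmetric]
        using c X a b by simp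
      then show ?thesis unfolding A1_def A2_def A3_def .
    qed
    have s0: "X $$ (a,b) = S 0" unfolding S_def using a b
      by (simp add: sum_lt2 Pent_def) (use a b in \<open>auto simp: lt2\<close>)
    have s1: "(pauliX*X*pauliX) $$ (a,b) = S 1" unfolding S_def PXP_entry[OF pauli_carrier(1) X a b]
      by (rule sum.cong[OF refl], rule sum.cong[OF refl]) (simp add: pauli_ent a b)
    have s2: "(pauliY*X*pauliY) $$ (a,b) = S 2" unfolding S_def PXP_entry[OF pauli_carrier(2) X a b]
      by (rule sum.cong[OF refl], rule sum.cong[OF refl]) (simp add: pauli_ent a b)
    have s3: "(pauliZ*X*pauliZ) $$ (a,b) = S 3" unfolding S_def PXP_entry[OF pauli_carrier(3) X a b]
      by (rule sum.cong[OF refl], rule sum.cong[OF refl]) (simp add: pauli_ent a b)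
    show ?thesis unfolding e s0 s1 s2 s3 sum_lt4 by simp
  qed
  finally show "pauli_map w x y z X $$ (a,b) = kraus 4 (2*4) 2 Kp (kron X (diag_op 4 (\<lambda>l. [w,x,y,z] ! l))) $$ (a,b)" by simp
qed (use X pauli_carrier in \<open>auto simp: kraus_def pauli_map_def carrier_matD\<close>)



definition bb :: "nat \<Rightarrow> nat \<Rightarrow> complex" where "bb l u = Pent l (u div 2) (u mod 2)"
definition rhoB :: "complex mat" where "rhoB = mat 4 4 (\<lambda>(u,v). bb 0 u * cnj (bb 0 v) / 2)"
definition MB :: "nat \<Rightarrow> complex mat" where "MB l = mat 4 4 (\<lambda>(u,v). bb l u * cnj (bb l v) / 2)"

lemma rank1_fpsd: "fpsd d (\<lambda>i j. b i * cnj (b j) / 2)"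
proof -
  have e: "BF d (\<lambda>i j. b i * cnj (b j) / 2) f f = complex_of_real ((cmod (\<Sum>i<d. cnj (f i) * b i))^2 / 2)" for f
  proof -
    have "BF d (\<lambda>i j. b i * cnj (b j) / 2) f f = BF d (\<lambda>i j. b i * cnj (b j)) f f / 2"
      unfolding BF_def by (simp add: sum_divide_distrib)
    also have "BF d (\<lambda>i j. b i * cnj (b j)) f f = complex_of_real ((cmod (\<Sum>i<d. cnj (f i) * b i))^2)"
      unfolding rank1_BF complex_norm_square ..
    finally show ?thesis by simp
  qed
  show ?thesis unfolding fpsd_def QF_BF e by simp
qed

lemma psd_rank1: "psd 4 (mat 4 4 (\<lambda>(u,v). b u * cnj (b v) / 2))"
  unfolding psd_iff
proof
  show "mat 4 4 (\<lambda>(u,v). b u * cnj (b v) / 2) \<in> carrier_mat 4 4" by simp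
  show "fpsd 4 (\<lambda>i j. mat 4 4 (\<lambda>(u,v). b u * cnj (b v) / 2) $$ (i,j))"
    by (rule fpsd_cong[OF rank1_fpsd]) simp
qed

lemma bb_orth: "y < 4 \<Longrightarrow> l < 4 \<Longrightarrow> (\<Sum>u<4. cnj (bb y u) * bb l u) = (if y = l then 2 else 0)"
  unfolding lt4 by (elim disjE) (simp_all add: sum_lt4 bb_def Pent_def)

lemma bb_compl: "i < 4 \<Longrightarrow> j < 4 \<Longrightarrow> (\<Sum>y<4. bb y i * cnj (bb y j)) = (if i = j then 2 else 0)"
  unfolding lt4 by (elim disjE) (simp_all add: sum_lt4 bb_def Pent_def)

lemma rhoB_density: "density (2*2) rhoB"
  unfolding density_def
proof
  show "psd (2*2) rhoB" unfolding rhoB_def by (simp add: psd_rank1)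
  show "mtrace rhoB = 1" unfolding mtrace_def rhoB_def by (simp add: sum_lt4 bb_def Pent_def)
qed

lemma MB_povm: "povm (2*2) 4 MB"
  unfolding povm_def
proof (intro conjI allI impI)
  fix y :: nat show "psd (2*2) (MB y)" unfolding MB_def by (simp add: psd_rank1)
next
  fix i j :: nat assume i: "i < 2*2" and j: "j < 2*2"
  then show "(\<Sum>y<4. MB y $$ (i,j)) = (1\<^sub>m (2*2) :: complex mat) $$ (i,j)"
  proof -
    have "(\<Sum>y<4. MB y $$ (i,j)) = (\<Sum>y<4. bb y i * cnj (bb y j)) / 2"
      unfolding MB_def using i j by (simp add: sum_divide_distrib)
    then show ?thesis using bb_compl[of i j] i j by (cases "i = j") simp_all
  qed
qed

lemma pauli_entry:
  assumes X: "X \<in> carrier_mat 2 2" and a: "a < 2" and b: "b < 2"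
  shows "pauli_map w x y z X $$ (a,b) = (\<Sum>l<4. complex_of_real ([w,x,y,z] ! l) * (\<Sum>i<2. \<Sum>j<2. Pent l a i * X $$ (i,j) * Pent l j b))"
proof -
  have D: "diag_op 4 (\<lambda>l. [w,x,y,z] ! l) \<in> carrier_mat 4 4" by (rule diag_carrier)
  have Y: "kron X (diag_op 4 (\<lambda>l. [w,x,y,z] ! l)) $$ (i*4+l, j*4+l) = X $$ (i,j) * complex_of_real ([w,x,y,z] ! l)"
    if "i < 2" "j < 2" "l < 4" for i j l
  proof -
    have "i*4+l < 2*4" "j*4+l < 2*4" using that lt_mult_idx by auto
    then show ?thesis using kron_entry[OF X D] that by (simp add: diag_entry)
  qed
  have "pauli_map w x y z X $$ (a,b) = (\<Sum>l<4. \<Sum>i<2. \<Sum>j<2. Pent l a i * (X $$ (i,j) * complex_of_real ([w,x,y,z] ! l)) * Pent l j b)"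
    unfolding pauli_sim[OF X] kraus_Kp_entry[OF a b]
    by (rule sum.cong[OF refl], rule sum.cong[OF refl], rule sum.cong[OF refl]) (simp add: Y Pent_herm b)
  then show ?thesis by (simp add: sum_distrib_left mult_ac)
qed

lemma Pent_bb_herm: "l < 4 \<Longrightarrow> v < 4 \<Longrightarrow> Pent l (v mod 2) (v div 2) = cnj (bb l v)"
  unfolding bb_def using Pent_herm[of l "v div 2" "v mod 2"] by (simp add: less_mult_imp_div_less)

lemma bell_T:
  assumes u: "u < 4" and v: "v < 4"
  shows "tensor_id 2 2 2 (pauli_map w x y z) rhoB $$ (u,v) = (\<Sum>l<4. complex_of_real ([w,x,y,z] ! l) * (bb l u * cnj (bb l v) / 2))"
proof -
  define A where "A = mat 2 2 (\<lambda>(i,j). rhoB $$ (i*2 + u mod 2, j*2 + v mod 2))"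
  have A: "A \<in> carrier_mat 2 2" unfolding A_def by simp
  have ab: "u div 2 < 2" "v div 2 < 2" using u v by auto
  have Ae: "A $$ (i,j) = (if i = u mod 2 \<and> j = v mod 2 then 1/2 else 0)" if "i < 2" "j < 2" for i j
  proof -
    have "i*2 + u mod 2 < 4" "j*2 + v mod 2 < 4" using that by auto
    then show ?thesis unfolding A_def rhoB_def bb_def using that by (auto simp: Pent_def)
  qed
  have "tensor_id 2 2 2 (pauli_map w x y z) rhoB $$ (u,v) = pauli_map w x y z A $$ (u div 2, v div 2)"
    unfolding tensor_id_def A_def using u v by simp
  also have "\<dots> = (\<Sum>l<4. complex_of_real ([w,x,y,z] ! l) * (\<Sum>i<2. \<Sum>j<2. Pent l (u div 2) i * A $$ (i,j) * Pent l j (v div 2)))"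
    by (rule pauli_entry[OF A ab])
  also have "\<dots> = (\<Sum>l<4. complex_of_real ([w,x,y,z] ! l) * (bb l u * cnj (bb l v) / 2))"
  proof (rule sum.cong[OF refl])
    fix l :: nat assume l: "l \<in> {..<4}"
    have um: "u mod 2 < 2" "v mod 2 < 2" by auto
    have "(\<Sum>i<2. \<Sum>j<2. Pent l (u div 2) i * A $$ (i,j) * Pent l j (v div 2))
      = (\<Sum>i<2. \<Sum>j<2. if i = u mod 2 then (if j = v mod 2 then Pent l (u div 2) i * (1/2) * Pent l j (v div 2) else 0) else 0)"
      by (rule sum.cong[OF refl], rule sum.cong[OF refl]) (simp add: Ae)
    also have "\<dots> = (\<Sum>i<2. if i = u mod 2 then (\<Sum>j<2. if j = v mod 2 then Pent l (u div 2) i * (1/2) * Pent l j (v div 2) else 0) else 0)"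
      by (rule sum.cong[OF refl]) simp
    also have "\<dots> = Pent l (u div 2) (u mod 2) * (1/2) * Pent l (v mod 2) (v div 2)"
      using um by (simp add: sum.delta sum.delta')
    also have "\<dots> = bb l u * cnj (bb l v) / 2"
      using Pent_bb_herm[of l v] l v by (simp add: bb_def)
    finally show "complex_of_real ([w,x,y,z] ! l) * (\<Sum>i<2. \<Sum>j<2. Pent l (u div 2) i * A $$ (i,j) * Pent l j (v div 2))
        = complex_of_real ([w,x,y,z] ! l) * (bb l u * cnj (bb l v) / 2)" by simp
  qed
  finally show ?thesis .
qed

lemma prod_sums: "(c::complex) * ((\<Sum>u<a. A u) * (\<Sum>v<b. B v)) = (\<Sum>u<a. \<Sum>v<b. c * (A u * B v))"
proof -
  have "(\<Sum>u<a. A u) * (\<Sum>v<b. B v) = (\<Sum>u<a. \<Sum>v<b. A u * B v)" by (rule sum_product)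
  then show ?thesis by (simp add: sum_distrib_left)
qed

lemma bell_value:
  assumes y': "y' < 4"
  shows "Re (mtrace (tensor_id 2 2 2 (pauli_map w x y z) rhoB * MB y')) = [w,x,y,z] ! y'"
proof -
  define T where "T = tensor_id 2 2 2 (pauli_map w x y z) rhoB"
  define f where "f l = complex_of_real ([w,x,y,z] ! l)" for l
  have Tc: "T \<in> carrier_mat 4 4" unfolding T_def tensor_id_def by simp
  have Mc: "MB y' \<in> carrier_mat 4 4" unfolding MB_def by simp
  have "mtrace (T * MB y') = (\<Sum>u<4. \<Sum>v<4. T $$ (u,v) * MB y' $$ (v,u))"
    using mtrace_mult[OF Tc Mc] by (simp add: TR_def)
  also have "\<dots> = (\<Sum>u<4. \<Sum>v<4. (\<Sum>l<4. f l * (bb l u * cnj (bb l v) / 2)) * (bb y' v * cnj (bb y' u) / 2))"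
    by (rule sum.cong[OF refl], rule sum.cong[OF refl]) (simp add: bell_T MB_def T_def f_def)
  also have "\<dots> = (\<Sum>l<4. f l / 4 * ((\<Sum>u<4. cnj (bb y' u) * bb l u) * (\<Sum>v<4. cnj (bb l v) * bb y' v)))"
  proof -
    have "(\<Sum>u<4. \<Sum>v<4. (\<Sum>l<4. f l * (bb l u * cnj (bb l v) / 2)) * (bb y' v * cnj (bb y' u) / 2))
        = (\<Sum>u<4. \<Sum>v<4. \<Sum>l<4. f l / 4 * ((cnj (bb y' u) * bb l u) * (cnj (bb l v) * bb y' v)))"
      by (rule sum.cong[OF refl], rule sum.cong[OF refl], subst sum_distrib_right, rule sum.cong[OF refl]) (simp add: field_simps)
    also have "\<dots> = (\<Sum>u<4. \<Sum>l<4. \<Sum>v<4. f l / 4 * ((cnj (bb y' u) * bb l u) * (cnj (bb l v) * bb y' v)))"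
      by (rule sum.cong[OF refl]) (rule sum.swap)
    also have "\<dots> = (\<Sum>l<4. \<Sum>u<4. \<Sum>v<4. f l / 4 * ((cnj (bb y' u) * bb l u) * (cnj (bb l v) * bb y' v)))"
      by (rule sum.swap)
    also have "\<dots> = (\<Sum>l<4. f l / 4 * ((\<Sum>u<4. cnj (bb y' u) * bb l u) * (\<Sum>v<4. cnj (bb l v) * bb y' v)))"
      by (rule sum.cong[OF refl]) (rule prod_sums[symmetric])
    finally show ?thesis .
  qed
  also have "\<dots> = (\<Sum>l<4. if l = y' then f l else 0)"
    by (rule sum.cong[OF refl]) (use y' in \<open>auto simp: bb_orth\<close>)
  also have "\<dots> = f y'" using y' by (simp add: sum.delta')
  finally show ?thesis unfolding T_def f_def by simp
qed



lemma main_fixed: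
  fixes w x y z dw dx dy dz :: real
  assumes nn: "w \<ge> 0" "x \<ge> 0" "y \<ge> 0" "z \<ge> 0" and s1: "w + x + y + z = 1" and s0: "dw + dx + dy + dz = 0"
  defines "q \<equiv> (\<lambda>l::nat. [w,x,y,z] ! l)" and "\<delta> \<equiv> (\<lambda>l::nat. [dw,dx,dy,dz] ! l)"
  shows "Gmin 2 2 (pauli_map w x y z) (pauli_map dw dx dy dz) = Jfi {0..<4} q \<delta> \<and>
         Gmax 2 2 (pauli_map w x y z) (pauli_map dw dx dy dz) = Jfi {0..<4} q \<delta>"
proof -
  let ?\<Phi> = "pauli_map w x y z" and ?\<Delta> = "pauli_map dw dx dy dz"
  have q0: "\<forall>l<4. q l \<ge> 0" unfolding q_def lt4 using nn by auto
  have q1: "(\<Sum>l<4. q l) = 1" unfolding q_def sum_lt4 using s1 by simp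
  have d0: "(\<Sum>l<4. \<delta> l) = 0" unfolding \<delta>_def sum_lt4 using s0 by simp
  have sim: "\<forall>X\<in>carrier_mat 2 2. ?\<Phi> X = kraus 4 (2*4) 2 Kp (kron X (diag_op 4 q)) \<and> ?\<Delta> X = kraus 4 (2*4) 2 Kp (kron X (diag_op 4 \<delta>))"
    unfolding q_def \<delta>_def using pauli_sim by blast
  have bell: "Jfi {0..<4} (\<lambda>l. Re (mtrace (tensor_id 2 2 2 ?\<Phi> rhoB * MB l))) (\<lambda>l. Re (mtrace (tensor_id 2 2 2 ?\<Delta> rhoB * MB l))) = Jfi {0..<4} q \<delta>"
    unfolding Jfi_def q_def \<delta>_def by (rule sum.cong[OF refl]) (simp add: bell_value)
  define S where "S = { Jfi {0..<N} (\<lambda>y. Re (mtrace (tensor_id 2 2 k ?\<Phi> \<rho> * M y))) (\<lambda>y. Re (mtrace (tensor_id 2 2 k ?\<Delta> \<rho> * M y)))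
      | k \<rho> N M. k > 0 \<and> density (2*k) \<rho> \<and> povm (2*k) N M }"
  have GS: "Gmin 2 2 ?\<Phi> ?\<Delta> = Sup S" unfolding Gmin_def S_def ..
  have "Sup S \<le> Jfi {0..<4} q \<delta>"
  proof (rule Sup_least)
    fix e assume "e \<in> S"
    then obtain k \<rho> N M where e: "e = Jfi {0..<N} (\<lambda>y. Re (mtrace (tensor_id 2 2 k ?\<Phi> \<rho> * M y))) (\<lambda>y. Re (mtrace (tensor_id 2 2 k ?\<Delta> \<rho> * M y)))"
      and c: "k > 0" "density (2*k) \<rho>" "povm (2*k) N M" unfolding S_def by blast
    show "e \<le> Jfi {0..<4} q \<delta>" unfolding e by (rule DP[OF channel_L0 q0 q1 sim c])
  qed
  moreover have "Jfi {0..<4} q \<delta> \<le> Sup S"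
  proof (rule Sup_upper)
    have "\<exists>k \<rho> N M. Jfi {0..<4} (\<lambda>l. Re (mtrace (tensor_id 2 2 2 ?\<Phi> rhoB * MB l))) (\<lambda>l. Re (mtrace (tensor_id 2 2 2 ?\<Delta> rhoB * MB l)))
       = Jfi {0..<N} (\<lambda>y. Re (mtrace (tensor_id 2 2 k ?\<Phi> \<rho> * M y))) (\<lambda>y. Re (mtrace (tensor_id 2 2 k ?\<Delta> \<rho> * M y)))
       \<and> k > 0 \<and> density (2*k) \<rho> \<and> povm (2*k) N M"
      by (rule exI[of _ 2], rule exI[of _ rhoB], rule exI[of _ 4], rule exI[of _ MB]) (use rhoB_density MB_povm in simp)
    then show "Jfi {0..<4} q \<delta> \<in> S" unfolding S_def bell[symmetric] by blast
  qed
  ultimately have G1: "Gmin 2 2 ?\<Phi> ?\<Delta> = Jfi {0..<4} q \<delta>" unfolding GS by (rule antisym)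
  define T where "T = { Jfi {0..<N} q' \<delta>'
      | N q' \<delta>' \<Lambda>. (\<forall>y<N. q' y \<ge> 0) \<and> (\<Sum>y<N. q' y) = 1 \<and> (\<Sum>y<N. \<delta>' y) = 0 \<and>
          channel (2*N) 2 \<Lambda> \<and>
          (\<forall>X \<in> carrier_mat 2 2. ?\<Phi> X = \<Lambda> (kron X (diag_op N q')) \<and> ?\<Delta> X = \<Lambda> (kron X (diag_op N \<delta>'))) }"
  have GT: "Gmax 2 2 ?\<Phi> ?\<Delta> = Inf T" unfolding Gmax_def T_def ..
  have "Inf T \<le> Jfi {0..<4} q \<delta>"
  proof (rule Inf_lower)
    show "Jfi {0..<4} q \<delta> \<in> T" unfolding T_def using q0 q1 d0 channel_L0 sim by blast
  qed
  moreover have "Jfi {0..<4} q \<delta> \<le> Inf T"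
  proof (rule Inf_greatest)
    fix e assume "e \<in> T"
    then obtain N q' \<delta>' \<Lambda> where e: "e = Jfi {0..<N} q' \<delta>'"
      and c: "\<forall>y<N. q' y \<ge> 0" "(\<Sum>y<N. q' y) = 1" "channel (2*N) 2 \<Lambda>"
        "\<forall>X \<in> carrier_mat 2 2. ?\<Phi> X = \<Lambda> (kron X (diag_op N q')) \<and> ?\<Delta> X = \<Lambda> (kron X (diag_op N \<delta>'))"
      unfolding T_def by blast
    have "Jfi {0..<4} (\<lambda>l. Re (mtrace (tensor_id 2 2 2 ?\<Phi> rhoB * MB l))) (\<lambda>l. Re (mtrace (tensor_id 2 2 2 ?\<Delta> rhoB * MB l))) \<le> Jfi {0..<N} q' \<delta>'"
      by (rule DP[OF c(3) c(1) c(2) c(4)]) (use rhoB_density MB_povm in auto)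
    then show "Jfi {0..<4} q \<delta> \<le> e" unfolding e bell .
  qed
  ultimately have G2: "Gmax 2 2 ?\<Phi> ?\<Delta> = Jfi {0..<4} q \<delta>" unfolding GT by (rule antisym)
  show ?thesis using G1 G2 by blast
qed

theorem mainTheorem4:
  fixes px py pz dpx dpy dpz :: "real \<Rightarrow> real"
  assumes "\<And>t. (px has_real_derivative dpx t) (at t)"
      and "\<And>t. (py has_real_derivative dpy t) (at t)"
      and "\<And>t. (pz has_real_derivative dpz t) (at t)"
      and "\<And>t. px t \<ge> 0" and "\<And>t. py t \<ge> 0" and "\<And>t. pz t \<ge> 0"
      and "\<And>t. px t + py t + pz t \<le> 1"
  shows "\<forall>\<theta>. let
           \<Lambda> = pauli_map (1 - px \<theta> - py \<theta> - pz \<theta>) (px \<theta>) (py \<theta>) (pz \<theta>);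
           \<Delta> = pauli_map (- dpx \<theta> - dpy \<theta> - dpz \<theta>) (dpx \<theta>) (dpy \<theta>) (dpz \<theta>);
           q = (\<lambda>y::nat. [1 - px \<theta> - py \<theta> - pz \<theta>, px \<theta>, py \<theta>, pz \<theta>] ! y);
           \<delta> = (\<lambda>y::nat. [- dpx \<theta> - dpy \<theta> - dpz \<theta>, dpx \<theta>, dpy \<theta>, dpz \<theta>] ! y)
         in Gmin 2 2 \<Lambda> \<Delta> = Jfi {0..<4} q \<delta> \<and> Gmax 2 2 \<Lambda> \<Delta> = Jfi {0..<4} q \<delta>"
proof
  fix \<theta>
  have "1 - px \<theta> - py \<theta> - pz \<theta> \<ge> 0" using assms(7)[of \<theta>] by simp
  then show "let
           \<Lambda> = pauli_map (1 - px \<theta> - py \<theta> - pz \<theta>) (px \<theta>) (py \<theta>) (pz \<theta>);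
           \<Delta> = pauli_map (- dpx \<theta> - dpy \<theta> - dpz \<theta>) (dpx \<theta>) (dpy \<theta>) (dpz \<theta>);
           q = (\<lambda>y::nat. [1 - px \<theta> - py \<theta> - pz \<theta>, px \<theta>, py \<theta>, pz \<theta>] ! y);
           \<delta> = (\<lambda>y::nat. [- dpx \<theta> - dpy \<theta> - dpz \<theta>, dpx \<theta>, dpy \<theta>, dpz \<theta>] ! y)
         in Gmin 2 2 \<Lambda> \<Delta> = Jfi {0..<4} q \<delta> \<and> Gmax 2 2 \<Lambda> \<Delta> = Jfi {0..<4} q \<delta>"
    unfolding Let_def
    by (rule main_fixed) (use assms(4-6) in auto)
qed


end
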